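(* Let $n\geq 3$, fix $0<\rho<1$ and put $\delta:=\frac{n-2}{n}\rho$. Define, for $t\in[-1,1]$, \begin{align*} F(t) &:= \int_{-1}^{1} |\delta t-x| (1-x^2)^{\frac {n-3}{2}}\, dx,\\ G(t) &:= (n-2)\rho t \int_{-1}^{1} |\delta t-x| (1-x^2)^{\frac {n-3}{2}} x\, dx,\\ H(t) &:= \frac {2}{n^2-1} (1-\delta^2 t^2)^{\frac {n+1}{2}} \sum_{k=2}^{\infty} \frac {(k-2)!}{(n+2)_{k-2}} C_{k-2}^{\frac {n+2}{2}}(\delta t)\, C_{k}^{\frac {n-2}{2}}(t)\, \rho^{k}. \end{align*} Then for $t\in(-1,1)$, \begin{align*} F''(t)+G''(t)+H''(t) &= 2 \delta^2 (1-\delta^2 t^2)^{\frac {n-3}{2}} \sum_{k=0}^{\infty} \frac {k!}{(n-2)_k} C_k^{\frac {n-2}{2}}(\delta t) C_k^{\frac {n-2}{2}}(t)\, \rho^k \\ &\quad - \frac {4n \delta^2}{n-1} (1-\delta^2 t^2)^{\frac {n-1}{2}} \sum_{k=0}^{\infty} \frac {k!}{(n)_k} C_k^{\frac {n}{2}}(\delta t) C_k^{\frac {n}{2}}(t)\, \rho^k \\ &\quad + \frac {2n^3 \delta^2}{(n+1)(n-1)(n-2)} (1-\delta^2 t^2)^{\frac {n+1}{2}} \sum_{k=0}^{\infty} \frac {k!}{(n+2)_k} C_k^{\frac {n+2}{2}}(\delta t) C_k^{\frac {n+2}{2}}(t)\, \rho^k. \end{align*}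
   Context: $C_k^\lambda$ is the Gegenbauer polynomial of degree $k$ associated to $\lambda$, defined by $(1-2xz+z^2)^{-\lambda}=\sum_{k\ge0}C_k^\lambda(x)z^k$; $(a)_0=1$, $(a)_k=a(a+1)\cdots(a+k-1)$ is the Pochhammer symbol. *)

theory Defs
  imports "HOL-Analysis.Analysis" "HOL-Computational_Algebra.Formal_Power_Series"
begin

text \<open>Gegenbauer polynomial C_k^lam(x), defined as the k-th coefficient of the formal
power series (1 - 2 x z + z^2)^(-lam) = (1 + (z^2 - 2 x z))^(-lam), i.e. the
binomial series (1+Y)^(-lam) composed with Y = z^2 - 2 x z.\<close>
definition gegenbauer :: "real \<Rightarrow> nat \<Rightarrow> real \<Rightarrow> real" where
  "gegenbauer lam k x =
     fps_nth (fps_compose (fps_binomial (- lam)) (fps_X ^ 2 - fps_const (2 * x) * fps_X)) k"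

end

theory Submission
  imports Defs
begin


definition Yx :: "real \<Rightarrow> real fps" where "Yx x = fps_X^2 - fps_const (2*x) * fps_X"
definition Gf :: "real \<Rightarrow> real \<Rightarrow> real fps" where
  "Gf l x = fps_compose (fps_binomial (-l)) (Yx x)"

lemma geg_Gf: "gegenbauer l k x = fps_nth (Gf l x) k"
  by (simp add: gegenbauer_def Gf_def Yx_def)

lemma Yx0[simp]: "fps_nth (Yx x) 0 = 0"
  by (simp add: Yx_def)

lemma geg_0[simp]: "gegenbauer l 0 x = 1"
  by (simp add: geg_Gf Gf_def fps_compose_nth)

lemma geg_1: "gegenbauer l (Suc 0) x = 2*l*x"
  by (simp add: geg_Gf Gf_def fps_compose_nth Yx_def numeral_2_eq_2)

lemma binom_shift: "fps_binomial (-l) = (1 + fps_X) * fps_binomial (-(l+1::real))"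
proof -
  have "fps_binomial (-l) = fps_binomial (1 + (-(l+1)))" by simp
  also have "\<dots> = (1 + fps_X) * fps_binomial (-(l+1::real))"
    by (simp only: fps_binomial_add_mult fps_binomial_1)
  finally show ?thesis .
qed

lemma Yx_deriv: "fps_deriv (Yx x) = 2 * fps_X - fps_const (2*x)"
  by (rule fps_ext) (auto simp: Yx_def fps_X_power_mult_nth numeral_2_eq_2 power2_eq_square)

lemma Gf_shift: "Gf l x = (1 + Yx x) * Gf (l+1) x"
  unfolding Gf_def
  by (subst binom_shift) (simp add: fps_compose_mult_distrib fps_compose_add_distrib)

lemma geg_B: "gegenbauer l k x = gegenbauer (l+1) k x
   - 2*x*(if k=0 then 0 else gegenbauer (l+1) (k-1) x)
   + (if k<2 then 0 else gegenbauer (l+1) (k-2) x)"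
proof -
  have "Gf l x = Gf (l+1) x + fps_X^2 * Gf (l+1) x - fps_const (2*x) * (fps_X * Gf (l+1) x)"
    by (subst Gf_shift) (simp add: Yx_def algebra_simps)
  hence "fps_nth (Gf l x) k = fps_nth (Gf (l+1) x + fps_X^2 * Gf (l+1) x - fps_const (2*x) * (fps_X * Gf (l+1) x)) k"
    by simp
  thus ?thesis
    by (simp add: geg_Gf fps_X_power_mult_nth)
qed

lemma binom_deriv: "fps_deriv (fps_binomial c) = fps_const c * fps_binomial (c - 1::real)"
  by (rule fps_ext) (simp add: gbinomial_absorption del: of_nat_Suc)

lemma Gf_deriv: "fps_deriv (Gf l x) = fps_const (2*l*x) * Gf (l+1) x - fps_const (2*l) * (fps_X * Gf (l+1) x)"
proof -
  have "fps_deriv (Gf l x) = (fps_deriv (fps_binomial (-l)) oo Yx x) * fps_deriv (Yx x)"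
    unfolding Gf_def by (rule fps_compose_deriv) simp
  also have "\<dots> = fps_const (-l) * Gf (l+1) x * (2 * fps_X - fps_const (2*x))"
    by (simp add: binom_deriv Gf_def Yx_deriv fps_compose_mult_distrib)
  also have "\<dots> = fps_const (2*l*x) * Gf (l+1) x - fps_const (2*l) * (fps_X * Gf (l+1) x)"
  proof -
    have h: "fps_const (2*l*x) = 2 * fps_const l * fps_const x" "fps_const (2*l) = 2 * fps_const l"
        "fps_const (2*x) = 2 * fps_const x" "fps_const (-l) = - fps_const l"
      by (simp_all add: fps_numeral_fps_const fps_const_mult)
    show ?thesis unfolding h by algebra
  qed
  finally show ?thesis .
qed

lemma geg_C: "real (Suc k) * gegenbauer l (Suc k) x =
   2*l*(x * gegenbauer (l+1) k x - (if k=0 then 0 else gegenbauer (l+1) (k-1) x))"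
proof -
  have "fps_nth (fps_deriv (Gf l x)) k = fps_nth (fps_const (2*l*x) * Gf (l+1) x - fps_const (2*l) * (fps_X * Gf (l+1) x)) k"
    by (simp only: Gf_deriv)
  thus ?thesis by (cases k) (simp_all add: geg_Gf algebra_simps del: of_nat_Suc)
qed




lemma geg_const: "gegenbauer l 0 = (\<lambda>_. 1)"
  by (rule ext) simp

lemma geg_C': "real (Suc k) * gegenbauer l (Suc k) x =
   2*l*(x * gegenbauer (l+1) k x - (if k=0 then 0 else gegenbauer (l+1) (k-1) x))"
  by (rule geg_C)

lemma geg_deriv_Suc: "((gegenbauer l (Suc k)) has_real_derivative (2*l*gegenbauer (l+1) k x)) (at x)"
proof (induction k arbitrary: l x rule: less_induct)
  case (less k)
  show ?case
  proof (cases k)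
    case 0
    have e: "gegenbauer l (Suc 0) = (\<lambda>y. 2*l*y)" by (rule ext) (simp add: geg_1)
    show ?thesis unfolding 0 e by (auto intro!: derivative_eq_intros)
  next
    case (Suc m)
    have e: "gegenbauer l (Suc k) = (\<lambda>y. 2*l/(real m+2) * (y * gegenbauer (l+1) (Suc m) y - gegenbauer (l+1) m y))"
    proof
      fix y
      from geg_C[of "Suc m" l y] show "gegenbauer l (Suc k) y = 2*l/(real m+2) * (y * gegenbauer (l+1) (Suc m) y - gegenbauer (l+1) m y)"
        using Suc by (simp add: field_simps)
    qed
    have ll: "l + 1 + 1 = l + 2" by simp
    have d1: "(gegenbauer (l+1) (Suc m) has_real_derivative 2*(l+1)*gegenbauer (l+2) m x) (at x)"
      using less.IH[of m "l+1" x] Suc by (simp add: ll)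
    define E where "E = (if m = 0 then 0 else 2*(l+1)*gegenbauer (l+2) (m-1) x)"
    have d0: "(gegenbauer (l+1) m has_real_derivative E) (at x)"
    proof (cases m)
      case 0 then show ?thesis by (simp add: E_def geg_const)
    next
      case (Suc p) then show ?thesis using less.IH[of p "l+1" x] \<open>k = Suc m\<close> by (simp add: E_def ll)
    qed
    have rec: "real (Suc m) * gegenbauer (l+1) (Suc m) x = 2*(l+1)*(x*gegenbauer (l+2) m x - (if m=0 then 0 else gegenbauer (l+2) (m-1) x))"
      using geg_C[of m "l+1" x] by (simp add: ll)
    have "((\<lambda>y. 2*l/(real m+2) * (y * gegenbauer (l+1) (Suc m) y - gegenbauer (l+1) m y)) has_real_derivative
       2*l/(real m+2) * ((1 * gegenbauer (l+1) (Suc m) x + (2*(l+1)*gegenbauer (l+2) m x) * x) - E)) (at x)"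
      by (intro DERIV_cmult DERIV_diff DERIV_mult DERIV_ident d1 d0)
    moreover have "2*l/(real m+2) * ((1 * gegenbauer (l+1) (Suc m) x + (2*(l+1)*gegenbauer (l+2) m x) * x) - E)
        = 2*l*gegenbauer (l+1) k x"
    proof -
      have "x * (2*(l+1)*gegenbauer (l+2) m x) - E = real (Suc m) * gegenbauer (l+1) (Suc m) x"
        unfolding rec E_def by (simp add: algebra_simps)
      hence "(1 * gegenbauer (l+1) (Suc m) x + (2*(l+1)*gegenbauer (l+2) m x) * x) - E
          = (real m + 2) * gegenbauer (l+1) (Suc m) x" by (simp add: algebra_simps)
      thus ?thesis using Suc by simp
    qed
    ultimately show ?thesis unfolding e by simp
  qed
qed

lemma geg_deriv: "((gegenbauer l k) has_real_derivative (if k = 0 then 0 else 2*l*gegenbauer (l+1) (k-1) x)) (at x)"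
  using geg_deriv_Suc[of l "k-1" x] by (cases k) (simp_all add: geg_const)

lemma geg_L: "(real p + 2*w) * gegenbauer w p x = 2*w*(gegenbauer (w+1) p x - x * (if p = 0 then 0 else gegenbauer (w+1) (p-1) x))"
proof (cases p)
  case 0 then show ?thesis by simp
next
  case (Suc q)
  have B: "gegenbauer w (Suc q) x = gegenbauer (w+1) (Suc q) x - 2*x*gegenbauer (w+1) q x + (if q = 0 then 0 else gegenbauer (w+1) (q-1) x)"
    using geg_B[of w "Suc q" x] by (cases q) auto
  have C: "real (Suc q) * gegenbauer w (Suc q) x = 2*w*(x * gegenbauer (w+1) q x - (if q=0 then 0 else gegenbauer (w+1) (q-1) x))"
    by (rule geg_C)
  have "(real p + 2*w) * gegenbauer w p x = real (Suc q) * gegenbauer w (Suc q) x + 2*w*gegenbauer w (Suc q) x"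
    using Suc by (simp add: algebra_simps)
  also have "\<dots> = 2*w*(gegenbauer (w+1) p x - x * gegenbauer (w+1) q x)"
    unfolding C  by (subst B) (simp add: Suc algebra_simps)
  finally show ?thesis using Suc by simp
qed

lemma geg_I2:
  assumes "m \<noteq> 0"
  shows "2*(m+1)*(1-x^2)*gegenbauer (m+2) p x - (2*m+1)*x*gegenbauer (m+1) (Suc p) x
     = -(real p+2)*(real p+2+2*m)/(2*m) * gegenbauer m (Suc (Suc p)) x"
proof -
  have ll: "m + 1 + 1 = m + 2" by simp
  define A where "A = gegenbauer m (Suc (Suc p)) x"
  define E1 where "E1 = gegenbauer (m+1) (Suc p) x"
  define E0 where "E0 = gegenbauer (m+1) p x"
  define D0 where "D0 = gegenbauer (m+2) p x"
  define Dm where "Dm = (if p = 0 then 0 else gegenbauer (m+2) (p-1) x)"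
  have e1: "(real p+2) * A = 2*m*(x*E1 - E0)"
    using geg_C[of "Suc p" m x] unfolding A_def E1_def E0_def by (simp add: add.commute)
  have e2: "(real p+1) * E1 = 2*(m+1)*(x*D0 - Dm)"
    using geg_C[of p "m+1" x] unfolding E1_def D0_def Dm_def by (simp add: ll add.commute)
  have e3: "(real p + 2*(m+1)) * E0 = 2*(m+1)*(D0 - x*Dm)"
    using geg_L[of p "m+1" x] unfolding E0_def D0_def Dm_def by (simp add: ll)
  have "2*m*(2*(m+1)*(1-x^2)*D0 - (2*m+1)*x*E1) = -((real p+2+2*m) * ((real p+2) * A))"
  proof -
    have "2*m*(2*(m+1)*(1-x^2)*D0 - (2*m+1)*x*E1) + (real p+2+2*m) * ((real p+2) * A)
       = 2*m*(2*(m+1)*(1-x^2)*D0 + x * ((real p+1) * E1) - (real p + 2*(m+1)) * E0)"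
      unfolding e1 by (simp add: algebra_simps)
    also have "\<dots> = 0" unfolding e2 e3 by (simp add: algebra_simps power2_eq_square)
    finally show ?thesis by (simp add: eq_neg_iff_add_eq_0)
  qed
  hence "2*(m+1)*(1-x^2)*D0 - (2*m+1)*x*E1 = -((real p+2+2*m) * ((real p+2) * A)) / (2*m)"
    using assms by (simp add: field_simps)
  thus ?thesis unfolding A_def D0_def E1_def by (simp add: field_simps)
qed




lemma rod_deriv:
  assumes "0 < m" "\<bar>a\<bar> < 1"
  shows "((\<lambda>a. (1-a^2) powr (m+1/2) * gegenbauer (m+1) p a) has_real_derivative
     (-(real p+1)*(real p+1+2*m)/(2*m) * ((1-a^2) powr (m-1/2) * gegenbauer m (Suc p) a))) (at a)"
proof -
  have q: "0 < 1 - a^2" using assms by (simp add: abs_square_less_1)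
  have d0: "((\<lambda>a. 1 - a^2) has_real_derivative -(2*a)) (at a)"
    by (auto intro!: derivative_eq_intros)
  have dq: "((\<lambda>a. (1-a^2) powr (m+1/2)) has_real_derivative (m+1/2) * (1-a^2) powr (m+1/2 - of_nat 1) * (-(2*a))) (at a)"
    using DERIV_fun_powr[OF d0, of "m+1/2"] q by simp
  define D where "D = (if p = 0 then 0 else 2*(m+1)*gegenbauer (m+1+1) (p-1) a)"
  have dC: "(gegenbauer (m+1) p has_real_derivative D) (at a)"
    unfolding D_def by (rule geg_deriv)
  have prod: "((\<lambda>a. (1-a^2) powr (m+1/2) * gegenbauer (m+1) p a) has_real_derivative
      (m+1/2) * (1-a^2) powr (m+1/2 - of_nat 1) * (-(2*a)) * gegenbauer (m+1) p a + D * (1-a^2) powr (m+1/2)) (at a)"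
    by (rule DERIV_mult[OF dq dC])
  have pw: "(1-a^2) powr (m+1/2) = (1-a^2) powr (m-1/2) * (1-a^2)"
  proof -
    have "(1-a^2) powr (m+1/2) = (1-a^2) powr ((m-1/2) + 1)"
      by (rule arg_cong[where f="\<lambda>e. (1-a^2) powr e"]) simp
    also have "\<dots> = (1-a^2) powr (m-1/2) * (1-a^2) powr 1" by (rule powr_add)
    also have "\<dots> = (1-a^2) powr (m-1/2) * (1-a^2)" using q by simp
    finally show ?thesis .
  qed
  have key: "(m+1/2) * (-(2*a)) * gegenbauer (m+1) p a + D * (1-a^2)
      = -(real p+1)*(real p+1+2*m)/(2*m) * gegenbauer m (Suc p) a"
  proof (cases p)
    case 0
    then show ?thesis using assms by (simp add: D_def geg_1 field_simps)
  next
    case (Suc r)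
    have ll: "m + 1 + 1 = m + 2" by simp
    have "(m+1/2) * (-(2*a)) * gegenbauer (m+1) p a + D * (1-a^2)
       = 2*(m+1)*(1-a^2)*gegenbauer (m+2) r a - (2*m+1)*a*gegenbauer (m+1) (Suc r) a"
      using Suc by (simp add: D_def ll algebra_simps)
    also have "\<dots> = -(real r+2)*(real r+2+2*m)/(2*m) * gegenbauer m (Suc (Suc r)) a"
      using geg_I2[of m a r] assms by simp
    also have "\<dots> = -(real p+1)*(real p+1+2*m)/(2*m) * gegenbauer m (Suc p) a"
      using Suc by (simp add: algebra_simps)
    finally show ?thesis .
  qed
  have "(m+1/2) * (1-a^2) powr (m+1/2 - of_nat 1) * (-(2*a)) * gegenbauer (m+1) p a + D * (1-a^2) powr (m+1/2)
      = (1-a^2) powr (m-1/2) * ((m+1/2) * (-(2*a)) * gegenbauer (m+1) p a + D * (1-a^2))"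
    unfolding pw by (simp add: algebra_simps)
  also have "\<dots> = -(real p+1)*(real p+1+2*m)/(2*m) * ((1-a^2) powr (m-1/2) * gegenbauer m (Suc p) a)"
    unfolding key by simp
  finally show ?thesis using prod by simp
qed

lemma geg_neg: "gegenbauer l k (-x) = (-1)^k * gegenbauer l k x"
proof (induction k arbitrary: l rule: less_induct)
  case (less k)
  show ?case
  proof (cases k)
    case 0 then show ?thesis by simp
  next
    case (Suc j)
    have C1: "real (Suc j) * gegenbauer l (Suc j) (-x) =
       2*l*(-x * gegenbauer (l+1) j (-x) - (if j=0 then 0 else gegenbauer (l+1) (j-1) (-x)))"
      by (rule geg_C)
    have C2: "real (Suc j) * gegenbauer l (Suc j) x =
       2*l*(x * gegenbauer (l+1) j x - (if j=0 then 0 else gegenbauer (l+1) (j-1) x))"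
      by (rule geg_C)
    have "real (Suc j) * gegenbauer l (Suc j) (-x) = real (Suc j) * ((-1)^(Suc j) * gegenbauer l (Suc j) x)"
    proof (cases j)
      case 0 then show ?thesis using C1 C2 less.IH[of j "l+1"] Suc by simp
    next
      case (Suc i)
      have a1: "gegenbauer (l+1) j (-x) = - ((-1)^i * gegenbauer (l+1) j x)" using less.IH[of j "l+1"] \<open>k = Suc j\<close> Suc by simp
      have a2: "gegenbauer (l+1) i (-x) = (-1)^i * gegenbauer (l+1) i x" using less.IH[of i "l+1"] \<open>k = Suc j\<close> Suc by simp
      have "real (Suc j) * gegenbauer l (Suc j) (-x) = 2*l*(-x * gegenbauer (l+1) j (-x) - gegenbauer (l+1) i (-x))"
        using C1 Suc by simp
      also have "\<dots> = 2*l*(-x * (- ((-1)^i * gegenbauer (l+1) j x)) - (-1)^i * gegenbauer (l+1) i x)"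
        by (simp only: a1 a2)
      also have "\<dots> = (-1)^i * (2*l*(x * gegenbauer (l+1) j x - gegenbauer (l+1) i x))" by (simp add: algebra_simps)
      also have "\<dots> = (-1)^i * (real (Suc j) * gegenbauer l (Suc j) x)" using C2 Suc by simp
      finally show ?thesis using Suc by simp
    qed
    moreover have "real (Suc j) \<noteq> 0" by simp
    ultimately show ?thesis using Suc mult_left_cancel by blast
  qed
qed

lemma geg_one: "gegenbauer l k 1 = pochhammer (2*l) k / fact k"
proof (induction k arbitrary: l rule: less_induct)
  case (less k)
  show ?case
  proof (cases k)
    case 0 then show ?thesis by simp
  next
    case (Suc j)
    show ?thesis
    proof (cases j)
      case 0 then show ?thesis using Suc by (simp add: geg_1)
    next
      case (Suc i)
      have C: "real (Suc j) * gegenbauer l (Suc j) 1 = 2*l*(gegenbauer (l+1) j 1 - gegenbauer (l+1) i 1)"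
        using geg_C[of j l 1] Suc by simp
      have I1: "gegenbauer (l+1) j 1 = pochhammer (2*l+2) j / fact j"
        using less.IH[of j "l+1"] \<open>k = Suc j\<close> by (simp add: algebra_simps)
      have I2: "gegenbauer (l+1) i 1 = pochhammer (2*l+2) i / fact i"
        using less.IH[of i "l+1"] \<open>k = Suc j\<close> Suc by (simp add: algebra_simps)
      have p1: "pochhammer (2*l+2) j = pochhammer (2*l+2) i * (2*l+2+real i)"
        using Suc by (simp add: pochhammer_Suc)
      have p2: "pochhammer (2*l) (Suc j) = 2*l*((2*l+1)*pochhammer (2*l+2) i)"
        using Suc by (simp add: pochhammer_rec add.assoc)
      have f1: "fact j = real j * fact i" "fact (Suc j) = real (Suc j) * fact j"
        using Suc by (simp_all add: fact_Suc)
      define P where "P = pochhammer (2*l+2) i"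
      define F where "F = (fact i :: real)"
      have F: "F > 0" by (simp add: F_def)
      have j0: "real j > 0" using Suc by simp
      have "0 < F * (1 + real i)" using F by simp
      hence nz: "F + F * real i \<noteq> 0" by (simp add: algebra_simps)
      have e1: "P*(2*l+2+real i)/(real j * F) - P/F = P*(2*l+1)/(real j * F)"
      proof -
        have "P/F = P*real j/(real j*F)" using j0 F by simp
        hence "P*(2*l+2+real i)/(real j * F) - P/F = (P*(2*l+2+real i) - P*real j)/(real j*F)"
          by (simp add: diff_divide_distrib)
        also have "P*(2*l+2+real i) - P*real j = P*(2*l+1)" using Suc by (simp add: algebra_simps)
        finally show ?thesis .
      qed
      have sj: "real (Suc j) \<noteq> 0" by (simp del: of_nat_Suc)
      have e2: "real (Suc j) * (2*l*((2*l+1)*P) / (real (Suc j) * (real j * F))) = 2*l*(P*(2*l+1)/(real j * F))"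
      proof -
        have "real (Suc j) * (2*l*((2*l+1)*P) / (real (Suc j) * (real j * F)))
            = (real (Suc j) * (2*l*((2*l+1)*P))) / (real (Suc j) * (real j * F))" by simp
        also have "\<dots> = (2*l*((2*l+1)*P)) / (real j * F)" using sj by (rule mult_divide_mult_cancel_left)
        finally show ?thesis by (simp add: algebra_simps)
      qed
      have "2*l*(P*(2*l+2+real i)/(real j * F) - P/F) = real (Suc j) * (2*l*((2*l+1)*P) / (real (Suc j) * (real j * F)))"
        unfolding e1 e2 ..
      hence "real (Suc j) * gegenbauer l (Suc j) 1 = real (Suc j) * (pochhammer (2*l) (Suc j) / fact (Suc j))"
        unfolding C I1 I2 p1 p2 f1 P_def F_def by simp
      then show ?thesis using \<open>k = Suc j\<close> sj mult_left_cancel by blast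
    qed
  qed
qed

lemma geg_bound:
  assumes "0 < m" "\<bar>x\<bar> \<le> 1"
  shows "\<bar>gegenbauer m k x\<bar> \<le> \<bar>gegenbauer m k 1\<bar>"
proof (cases k)
  case 0 then show ?thesis by simp
next
  case (Suc j)
  define y where "y = gegenbauer m k"
  define y1 where "y1 = (\<lambda>x. 2*m*gegenbauer (m+1) j x)"
  define y2 where "y2 = (\<lambda>x. 2*m*(if j = 0 then 0 else 2*(m+1)*gegenbauer (m+1+1) (j-1) x))"
  define K where "K = real k * (real k + 2*m)"
  have K: "K > 0" using assms Suc by (simp add: K_def)
  have dy: "\<And>x. (y has_real_derivative y1 x) (at x)"
    using geg_deriv[of m k] Suc by (simp add: y_def y1_def)
  have dy1: "\<And>x. (y1 has_real_derivative y2 x) (at x)"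
    unfolding y1_def y2_def by (intro DERIV_cmult geg_deriv)
  have ode: "(1-x^2)*y2 x - (2*m+1)*x*y1 x + K * y x = 0" for x
  proof (cases j)
    case 0 then show ?thesis using Suc by (simp add: y_def y1_def y2_def K_def geg_1 algebra_simps)
  next
    case (Suc p)
    have "2*(m+1)*(1-x^2)*gegenbauer (m+2) p x - (2*m+1)*x*gegenbauer (m+1) (Suc p) x
     = -(real p+2)*(real p+2+2*m)/(2*m) * gegenbauer m (Suc (Suc p)) x"
      using geg_I2[of m x p] assms by simp
    moreover have "m + 1 + 1 = m + 2" by simp
    ultimately show ?thesis using Suc \<open>k = Suc j\<close> assms
      by (simp add: y_def y1_def y2_def K_def field_simps)
  qed
  define Phi where "Phi = (\<lambda>x. (y x)^2 + (1-x^2)*(y1 x)^2/K)"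
  have dPhi: "(Phi has_real_derivative 4*m*x*(y1 x)^2/K) (at x)" for x
  proof -
    have "(Phi has_real_derivative 2*y x*y1 x + ((-(2*x))*(y1 x)^2 + (1-x^2)*(2*y1 x*y2 x))/K) (at x)"
      unfolding Phi_def using K
      by (auto intro!: derivative_eq_intros dy dy1 simp: field_simps power2_eq_square)
    moreover have "2*y x*y1 x + ((-(2*x))*(y1 x)^2 + (1-x^2)*(2*y1 x*y2 x))/K = 4*m*x*(y1 x)^2/K"
    proof -
      have h: "(1-x^2)*y2 x = (2*m+1)*x*y1 x - K * y x" using ode[of x] by simp
      have "(1-x^2)*(2*y1 x*y2 x) = 2*y1 x*((1-x^2)*y2 x)" by (simp add: algebra_simps)
      also have "\<dots> = 2*y1 x*((2*m+1)*x*y1 x - K * y x)" by (simp only: h)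
      finally have "(1-x^2)*(2*y1 x*y2 x) = 2*y1 x*((2*m+1)*x*y1 x - K * y x)" .
      thus ?thesis using K by (simp add: field_simps power2_eq_square)
    qed
    ultimately show ?thesis by simp
  qed
  have cont: "continuous_on A Phi" for A
    using dPhi by (meson DERIV_isCont continuous_at_imp_continuous_on)
  have mono: "Phi z \<le> Phi 1" if "0 \<le> z" "z \<le> 1" for z
  proof (rule DERIV_nonneg_imp_increasing_open[OF that(2) _ cont])
    fix u assume "z < u" "u < 1"
    hence "0 \<le> 4*m*u*(y1 u)^2/K" using that assms K by simp
    thus "\<exists>d. (Phi has_real_derivative d) (at u) \<and> 0 \<le> d" using dPhi by blast
  qed
  have low: "(y z)^2 \<le> Phi z" if "\<bar>z\<bar> \<le> 1" for z
  proof -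
    have "0 \<le> 1 - z^2" using that by (simp add: abs_square_le_1)
    thus ?thesis unfolding Phi_def using K by simp
  qed
  have "\<bar>y z\<bar> \<le> \<bar>y 1\<bar>" if "0 \<le> z" "z \<le> 1" for z
  proof -
    have "(y z)^2 \<le> (y 1)^2" using low[of z] mono[OF that] that by (simp add: Phi_def)
    thus ?thesis by (simp add: abs_le_square_iff)
  qed
  moreover have "\<bar>y x\<bar> = \<bar>y \<bar>x\<bar>\<bar>"
    unfolding y_def by (cases "x \<ge> 0") (simp_all add: geg_neg abs_mult)
  ultimately show ?thesis using assms unfolding y_def by (metis abs_ge_zero)
qed

lemma poch_bound:
  assumes "0 < c" "c \<le> real N"
  shows "pochhammer c k / fact k \<le> (real k + 1)^N"
proof (induction k)
  case 0 then show ?case by simp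
next
  case (Suc k)
  have b: "1 + real N * (1/(real k+1)) \<le> (1 + 1/(real k+1))^N"
  proof (rule Bernoulli_inequality)
    have "0 \<le> 1/(real k+1)" by simp
    thus "-1 \<le> 1/(real k+1)" by linarith
  qed
  have pos: "0 \<le> pochhammer c k / fact k" using assms by (simp add: pochhammer_nonneg)
  have "pochhammer c (Suc k) / fact (Suc k) = pochhammer c k / fact k * ((c + real k)/(real k+1))"
    by (simp add: pochhammer_Suc fact_Suc field_simps)
  also have "\<dots> \<le> (real k + 1)^N * ((c + real k)/(real k+1))"
    using Suc.IH assms by (intro mult_right_mono) auto
  also have "\<dots> \<le> (real k + 1)^N * (1 + real N * (1/(real k+1)))"
  proof (intro mult_left_mono)
    have "(c + real k)/(real k+1) \<le> (real k + 1 + real N)/(real k+1)"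
      by (rule divide_right_mono) (use assms in auto)
    also have "\<dots> = 1 + real N * (1/(real k+1))" by (simp add: field_simps)
    finally show "(c + real k)/(real k+1) \<le> 1 + real N * (1/(real k+1))" .
  qed simp
  also have "\<dots> \<le> (real k + 1)^N * (1 + 1/(real k+1))^N"
    using b by (intro mult_left_mono) auto
  also have "\<dots> = (real (Suc k) + 1)^N"
    by (simp add: power_mult_distrib[symmetric] field_simps)
  finally show ?case .
qed

lemma geg_poly_bound:
  assumes "0 < m" "2*m \<le> real N" "\<bar>x\<bar> \<le> 1"
  shows "\<bar>gegenbauer m k x\<bar> \<le> (real k + 1)^N"
proof -
  have "\<bar>gegenbauer m k x\<bar> \<le> \<bar>gegenbauer m k 1\<bar>" by (rule geg_bound) (use assms in auto)
  also have "\<dots> = pochhammer (2*m) k / fact k"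
    using assms by (simp add: geg_one pochhammer_nonneg)
  also have "\<dots> \<le> (real k + 1)^N" by (rule poch_bound) (use assms in auto)
  finally show ?thesis .
qed




lemma int_upper_deriv:
  assumes "continuous_on {-1..1} g" "-1 < b" "b < 1"
  shows "((\<lambda>a. integral {-1..a} g) has_real_derivative g b) (at b)"
  using integral_has_real_derivative[OF assms(1), of b] assms at_within_Icc_at[of "-1" b 1] by simp

lemma cont_int:
  fixes g :: "real \<Rightarrow> real"
  assumes "continuous_on {-1..1} g" "-1 \<le> c" "d \<le> 1"
  shows "g integrable_on {c..d}"
proof -
  have "continuous_on {c..d} g" by (rule continuous_on_subset[OF assms(1)]) (use assms in auto)
  thus ?thesis by (rule integrable_continuous_interval)
qed

lemma absint_eq:
  fixes g :: "real \<Rightarrow> real"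
  assumes cg: "continuous_on {-1..1} g" and a: "-1 \<le> a" "a \<le> 1"
  shows "integral {-1..1} (\<lambda>x. \<bar>a - x\<bar> * g x) =
    2*a*integral {-1..a} g - 2*integral {-1..a} (\<lambda>x. x * g x)
    + integral {-1..1} (\<lambda>x. x * g x) - a * integral {-1..1} g"
proof -
  have cxg: "continuous_on {-1..1} (\<lambda>x. x * g x)" by (intro continuous_intros cg)
  have ch: "continuous_on {-1..1} (\<lambda>x. \<bar>a - x\<bar> * g x)" by (intro continuous_intros cg)
  have cag: "continuous_on {-1..1} (\<lambda>x. a * g x)" by (intro continuous_intros cg)
  have i1: "integral {-1..a} (\<lambda>x. \<bar>a - x\<bar> * g x) + integral {a..1} (\<lambda>x. \<bar>a - x\<bar> * g x)
      = integral {-1..1} (\<lambda>x. \<bar>a - x\<bar> * g x)"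
    by (rule Henstock_Kurzweil_Integration.integral_combine) (use a cont_int[OF ch] in auto)
  have i2: "integral {-1..a} (\<lambda>x. \<bar>a - x\<bar> * g x) = a * integral {-1..a} g - integral {-1..a} (\<lambda>x. x * g x)"
  proof -
    have "integral {-1..a} (\<lambda>x. \<bar>a - x\<bar> * g x) = integral {-1..a} (\<lambda>x. a * g x - x * g x)"
      by (rule integral_cong) (auto simp: algebra_simps)
    also have "\<dots> = integral {-1..a} (\<lambda>x. a * g x) - integral {-1..a} (\<lambda>x. x * g x)"
      by (rule integral_diff) (use a cont_int[OF cag] cont_int[OF cxg] in auto)
    finally show ?thesis by simp
  qed
  have i3: "integral {a..1} (\<lambda>x. \<bar>a - x\<bar> * g x) = integral {a..1} (\<lambda>x. x * g x) - a * integral {a..1} g"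
  proof -
    have "integral {a..1} (\<lambda>x. \<bar>a - x\<bar> * g x) = integral {a..1} (\<lambda>x. x * g x - a * g x)"
      by (rule integral_cong) (auto simp: algebra_simps)
    also have "\<dots> = integral {a..1} (\<lambda>x. x * g x) - integral {a..1} (\<lambda>x. a * g x)"
      by (rule integral_diff) (use a cont_int[OF cag] cont_int[OF cxg] in auto)
    finally show ?thesis by simp
  qed
  have i4: "integral {-1..a} g + integral {a..1} g = integral {-1..1} g"
    by (rule Henstock_Kurzweil_Integration.integral_combine) (use a cont_int[OF cg] in auto)
  have i5: "integral {-1..a} (\<lambda>x. x * g x) + integral {a..1} (\<lambda>x. x * g x) = integral {-1..1} (\<lambda>x. x * g x)"
    by (rule Henstock_Kurzweil_Integration.integral_combine) (use a cont_int[OF cxg] in auto)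
  have i4': "integral {a..1} g = integral {-1..1} g - integral {-1..a} g" using i4 by simp
  have i5': "integral {a..1} (\<lambda>x. x * g x) = integral {-1..1} (\<lambda>x. x * g x) - integral {-1..a} (\<lambda>x. x * g x)"
    using i5 by simp
  show ?thesis unfolding i1[symmetric] i2 i3 i4' i5' by (simp add: algebra_simps)
qed

lemma absint_deriv:
  fixes g :: "real \<Rightarrow> real"
  assumes cg: "continuous_on {-1..1} g" and b: "-1 < b" "b < 1"
  shows "((\<lambda>a. integral {-1..1} (\<lambda>x. \<bar>a - x\<bar> * g x)) has_real_derivative
          2 * integral {-1..b} g - integral {-1..1} g) (at b)"
proof -
  have cxg: "continuous_on {-1..1} (\<lambda>x. x * g x)" by (intro continuous_intros cg)
  have d1: "((\<lambda>a. integral {-1..a} g) has_real_derivative g b) (at b)" by (rule int_upper_deriv[OF cg b])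
  have d2: "((\<lambda>a. integral {-1..a} (\<lambda>x. x * g x)) has_real_derivative b * g b) (at b)"
    using int_upper_deriv[OF cxg b] by simp
  have "((\<lambda>a. 2*a*integral {-1..a} g - 2*integral {-1..a} (\<lambda>x. x * g x)
    + integral {-1..1} (\<lambda>x. x * g x) - a * integral {-1..1} g) has_real_derivative
     2 * integral {-1..b} g - integral {-1..1} g) (at b)"
    by (rule derivative_eq_intros d1 d2 refl | simp)+
  then show ?thesis
    by (rule has_field_derivative_transform_within_open[where S="{-1<..<1}"])
       (use b absint_eq[OF cg] in auto)
qed

lemma absint_deriv2:
  fixes g :: "real \<Rightarrow> real"
  assumes cg: "continuous_on {-1..1} g" and b: "-1 < b" "b < 1"
  shows "((\<lambda>a. 2 * integral {-1..a} g - integral {-1..1} g) has_real_derivative 2 * g b) (at b)"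
  using int_upper_deriv[OF cg b] by (auto intro!: derivative_eq_intros)

definition wt :: "real \<Rightarrow> real \<Rightarrow> real" where
  "wt e x = (if e = 0 then 1 else (1 - x^2) powr e)"

lemma wt_cont: "0 \<le> e \<Longrightarrow> continuous_on {-1..1} (wt e)"
proof (cases "e = 0")
  case True then show ?thesis by (simp add: wt_def)
next
  case False
  assume "0 \<le> e"
  hence "continuous_on {-1..1} (\<lambda>x. (1 - x^2) powr e)"
    using False by (intro continuous_on_powr' continuous_intros) (auto simp: abs_square_le_1)
  then show ?thesis using False by (simp add: wt_def)
qed

lemma wt_inner: "-1 < x \<Longrightarrow> x < 1 \<Longrightarrow> wt e x = (1 - x^2) powr e"
  by (auto simp: wt_def abs_square_less_1 power2_eq_1_iff)

lemma wt_spike: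
  "integral {-1..1} (\<lambda>x. f x * (1 - x^2) powr e) = integral {-1..1} (\<lambda>x. f x * wt e x)"
  by (rule integral_spike[where S="{-1,1}"]) (auto simp: wt_inner)

lemma wt_spike2:
  "integral {-1..1} (\<lambda>x. f x * (1 - x^2) powr e * x) = integral {-1..1} (\<lambda>x. f x * (wt e x * x))"
  by (rule integral_spike[where S="{-1,1}"]) (auto simp: wt_inner)

lemma deriv2_helper:
  assumes "\<And>s. -1 < s \<Longrightarrow> s < 1 \<Longrightarrow> (f has_real_derivative f1 s) (at s)"
    and "(f1 has_real_derivative D) (at t)" and "-1 < t" "t < 1"
  shows "deriv (deriv f) t = D"
proof -
  have ev: "eventually (\<lambda>s. s \<in> {-1<..<1}) (nhds t)"
    using assms(3,4) by (intro eventually_nhds_in_open) auto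
  have "eventually (\<lambda>s. deriv f s = f1 s) (nhds t)"
    by (rule eventually_mono[OF ev]) (use assms(1) DERIV_imp_deriv in auto)
  hence "deriv (deriv f) t = deriv f1 t" by (rule deriv_cong_ev) simp
  also have "\<dots> = D" using assms(2) by (rule DERIV_imp_deriv)
  finally show ?thesis .
qed

lemma small_mult:
  fixes \<delta> s :: real
  assumes "\<bar>\<delta>\<bar> < 1" "-1 < s" "s < 1"
  shows "-1 < \<delta>* s" "\<delta>* s < 1"
proof -
  have "\<bar>\<delta>\<bar> * \<bar>s\<bar> < 1 * 1" using assms by (intro mult_strict_mono') auto
  hence "\<bar>\<delta> * s\<bar> < 1" by (simp add: abs_mult)
  thus "-1 < \<delta>* s" "\<delta>* s < 1" by auto
qed

lemma F_second:
  fixes e \<delta> t :: real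
  assumes e: "0 \<le> e" and d: "\<bar>\<delta>\<bar> < 1" and t: "-1 < t" "t < 1"
  shows "deriv (deriv (\<lambda>t. integral {-1..1} (\<lambda>x. \<bar>\<delta>*t - x\<bar> * (1-x^2) powr e))) t
     = 2*\<delta>^2*(1-(\<delta>*t)^2) powr e"
proof -
  define g where "g = wt e"
  have cg: "continuous_on {-1..1} g" unfolding g_def by (rule wt_cont[OF e])
  have eqF: "(\<lambda>t. integral {-1..1} (\<lambda>x. \<bar>\<delta>*t - x\<bar> * (1-x^2) powr e))
      = (\<lambda>s. integral {-1..1} (\<lambda>x. \<bar>\<delta>* s - x\<bar> * g x))"
    unfolding g_def by (rule ext) (rule wt_spike)
  have d1: "((\<lambda>s. integral {-1..1} (\<lambda>x. \<bar>\<delta>* s - x\<bar> * g x)) has_real_derivative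
      (2 * integral {-1..\<delta>* s} g - integral {-1..1} g) * \<delta>) (at s)" if "-1 < s" "s < 1" for s
    using absint_deriv[OF cg small_mult[OF d that]]
    by (rule DERIV_chain2[where g="\<lambda>s. \<delta>* s" and f="\<lambda>a. integral {-1..1} (\<lambda>x. \<bar>a - x\<bar> * g x)"])
       (auto intro!: derivative_eq_intros)
  have d2: "((\<lambda>s. (2 * integral {-1..\<delta>* s} g - integral {-1..1} g) * \<delta>) has_real_derivative
      (2 * g (\<delta>*t) * \<delta>) * \<delta>) (at t)"
    using absint_deriv2[OF cg small_mult[OF d t]]
    by (intro DERIV_cmult_right DERIV_chain2[where g="\<lambda>s. \<delta>* s" and f="\<lambda>a. 2 * integral {-1..a} g - integral {-1..1} g"])
       (auto intro!: derivative_eq_intros)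
  have "deriv (deriv (\<lambda>s. integral {-1..1} (\<lambda>x. \<bar>\<delta>* s - x\<bar> * g x))) t = (2 * g (\<delta>*t) * \<delta>) * \<delta>"
    by (rule deriv2_helper[OF d1 d2 t])
  moreover have "g (\<delta>*t) = (1-(\<delta>*t)^2) powr e"
    unfolding g_def using small_mult[OF d t] by (rule wt_inner)
  ultimately show ?thesis unfolding eqF by (simp add: power2_eq_square algebra_simps)
qed

lemma xw_integral:
  fixes e a :: real
  assumes e: "0 \<le> e" and a: "-1 \<le> a" "a \<le> 1"
  shows "integral {-1..a} (\<lambda>x. wt e x * x) = -((1-a^2) powr (e+1)) / (2*(e+1))"
proof -
  define A where "A = (\<lambda>x::real. -((1-x^2) powr (e+1)) / (2*(e+1)))"
  have cA: "continuous_on {-1..a} A"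
    unfolding A_def using a e
    by (intro continuous_intros continuous_on_powr') (auto simp: abs_square_le_1)
  have dA: "(A has_vector_derivative wt e x * x) (at x)" if "x \<in> {-1<..<a}" for x
  proof -
    have x: "-1 < x" "x < 1" using that a by auto
    have q: "0 < 1 - x^2" using x by (simp add: abs_square_less_1)
    have d0: "((\<lambda>x. 1 - x^2) has_real_derivative -(2*x)) (at x)"
      by (auto intro!: derivative_eq_intros)
    have "((\<lambda>x. (1-x^2) powr (e+1)) has_real_derivative (e+1) * (1-x^2) powr (e+1 - of_nat 1) * (-(2*x))) (at x)"
      using DERIV_fun_powr[OF d0, of "e+1"] q by simp
    hence "(A has_real_derivative -((e+1) * (1-x^2) powr (e+1 - of_nat 1) * (-(2*x))) / (2*(e+1))) (at x)"
      unfolding A_def by (intro DERIV_cdivide DERIV_minus)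
    moreover have "-((e+1) * (1-x^2) powr (e+1 - of_nat 1) * (-(2*x))) / (2*(e+1)) = wt e x * x"
      using e x by (simp add: wt_inner field_simps)
    ultimately show ?thesis by (simp add: has_real_derivative_iff_has_vector_derivative)
  qed
  have "((\<lambda>x. wt e x * x) has_integral (A a - A (-1))) {-1..a}"
    by (rule fundamental_theorem_of_calculus_interior[OF a(1) cA dA])
  hence "integral {-1..a} (\<lambda>x. wt e x * x) = A a - A (-1)" by (rule integral_unique)
  also have "A (-1) = 0" using e by (simp add: A_def)
  finally show ?thesis by (simp add: A_def)
qed

lemma G_second:
  fixes e \<delta> t c :: real
  assumes e: "0 \<le> e" and d: "\<bar>\<delta>\<bar> < 1" and t: "-1 < t" "t < 1"
  shows "deriv (deriv (\<lambda>t. c * t * integral {-1..1} (\<lambda>x. \<bar>\<delta> * t - x\<bar> * (1-x^2) powr e * x))) t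
     = -2*c*\<delta>*(1-(\<delta> * t)^2) powr (e+1)/(e+1) + 2*c*t*\<delta>^2*((\<delta> * t)*(1-(\<delta> * t)^2) powr e)"
proof -
  define g where "g = (\<lambda>x. wt e x * x)"
  have cg: "continuous_on {-1..1} g" unfolding g_def by (intro continuous_intros wt_cont[OF e])
  define Psi where "Psi = (\<lambda>a. integral {-1..1} (\<lambda>x. \<bar>a - x\<bar> * g x))"
  define Psi1 where "Psi1 = (\<lambda>a. 2 * integral {-1..a} g - integral {-1..1} g)"
  have eqG: "(\<lambda>t. c * t * integral {-1..1} (\<lambda>x. \<bar>\<delta> * t - x\<bar> * (1-x^2) powr e * x))
      = (\<lambda>s. c * s * Psi (\<delta> * s))"
    unfolding Psi_def g_def by (rule ext) (simp add: wt_spike2)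
  have dPsi: "(Psi has_real_derivative Psi1 a) (at a)" if "-1 < a" "a < 1" for a
    unfolding Psi_def Psi1_def by (rule absint_deriv[OF cg that])
  have dPsi1: "(Psi1 has_real_derivative 2 * g a) (at a)" if "-1 < a" "a < 1" for a
    unfolding Psi1_def by (rule absint_deriv2[OF cg that])
  have d1: "((\<lambda>s. c * s * Psi (\<delta> * s)) has_real_derivative c * Psi (\<delta> * s) + c * s * (Psi1 (\<delta> * s) * \<delta>)) (at s)"
    if "-1 < s" "s < 1" for s
  proof -
    have "((\<lambda>s. Psi (\<delta> * s)) has_real_derivative Psi1 (\<delta> * s) * \<delta>) (at s)"
      using dPsi[OF small_mult[OF d that]]
      by (rule DERIV_chain2[where g="\<lambda>s. \<delta> * s" and f=Psi]) (auto intro!: derivative_eq_intros)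
    thus ?thesis by (auto intro!: derivative_eq_intros simp: algebra_simps)
  qed
  have d2: "((\<lambda>s. c * Psi (\<delta> * s) + c * s * (Psi1 (\<delta> * s) * \<delta>)) has_real_derivative
       c * (Psi1 (\<delta> * t) * \<delta>) + (c * (Psi1 (\<delta> * t) * \<delta>) + c * t * ((2 * g (\<delta> * t) * \<delta>) * \<delta>))) (at t)"
  proof -
    have a1: "((\<lambda>s. Psi (\<delta> * s)) has_real_derivative Psi1 (\<delta> * t) * \<delta>) (at t)"
      using dPsi[OF small_mult[OF d t]]
      by (rule DERIV_chain2[where g="\<lambda>s. \<delta> * s" and f=Psi]) (auto intro!: derivative_eq_intros)
    have a2: "((\<lambda>s. Psi1 (\<delta> * s)) has_real_derivative (2 * g (\<delta> * t)) * \<delta>) (at t)"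
      using dPsi1[OF small_mult[OF d t]]
      by (rule DERIV_chain2[where g="\<lambda>s. \<delta> * s" and f=Psi1]) (auto intro!: derivative_eq_intros)
    show ?thesis
      by (rule derivative_eq_intros a1 a2 refl | simp)+
  qed
  have "deriv (deriv (\<lambda>s. c * s * Psi (\<delta> * s))) t =
       c * (Psi1 (\<delta> * t) * \<delta>) + (c * (Psi1 (\<delta> * t) * \<delta>) + c * t * ((2 * g (\<delta> * t) * \<delta>) * \<delta>))"
    by (rule deriv2_helper[OF d1 d2 t])
  moreover have "Psi1 (\<delta> * t) = -((1-(\<delta> * t)^2) powr (e+1)) / (e+1)"
  proof -
    have "integral {-1..1} g = 0" using xw_integral[OF e, of 1] e by (simp add: g_def)
    moreover have "integral {-1..\<delta> * t} g = -((1-(\<delta> * t)^2) powr (e+1)) / (2*(e+1))"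
      unfolding g_def by (rule xw_integral[OF e]) (use small_mult[OF d t] in auto)
    moreover have "e + 1 \<noteq> 0" "2*e+2 \<noteq> 0" using e by auto
    ultimately show ?thesis by (simp add: Psi1_def field_simps)
  qed
  moreover have "g (\<delta> * t) = (\<delta> * t) * (1-(\<delta> * t)^2) powr e"
    unfolding g_def using wt_inner[OF small_mult[OF d t]] by simp
  ultimately show ?thesis unfolding eqG by (simp add: power2_eq_square power3_eq_cube algebra_simps)
qed




lemma abs_mult_le: "\<bar>x\<bar> \<le> X \<Longrightarrow> \<bar>y\<bar> \<le> Y \<Longrightarrow> \<bar>x * y\<bar> \<le> X * (Y::real)"
  by (simp add: abs_mult mult_mono')

lemma wgeg_bound:
  assumes "0 \<le> p" "0 < m" "2*m \<le> real N" "\<bar>a\<bar> \<le> 1"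
  shows "\<bar>(1-a^2) powr p * gegenbauer m k a\<bar> \<le> (real k + 1)^N"
proof -
  have "0 \<le> 1 - a^2" using assms by (simp add: abs_square_le_1)
  hence "(1-a^2) powr p \<le> 1 powr p" using assms by (intro powr_mono2) auto
  hence "\<bar>(1-a^2) powr p\<bar> \<le> 1" by simp
  hence "\<bar>(1-a^2) powr p * gegenbauer m k a\<bar> \<le> 1 * (real k + 1)^N"
    by (rule abs_mult_le) (rule geg_poly_bound[OF assms(2,3,4)])
  thus ?thesis by simp
qed

lemma fact_le_poch: "1 \<le> c \<Longrightarrow> fact j \<le> pochhammer (c::real) j"
proof (induction j)
  case 0 then show ?case by simp
next
  case (Suc j)
  have "fact (Suc j) = fact j * (real j + 1)" by (simp add: fact_Suc algebra_simps)
  also have "\<dots> \<le> pochhammer c j * (c + real j)"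
    using Suc pochhammer_pos[of c j] by (intro mult_mono) auto
  also have "\<dots> = pochhammer c (Suc j)" by (simp add: pochhammer_Suc)
  finally show ?case .
qed

lemma fact_poch_le: "1 \<le> c \<Longrightarrow> fact j / pochhammer (c::real) j \<le> 1"
  using fact_le_poch[of c j] pochhammer_pos[of c j] by simp

lemma summable_poly_geom:
  fixes r :: real
  assumes r: "0 < r" "r < 1"
  shows "summable (\<lambda>j. (real j + 1)^P * r^j)"
proof -
  have lim: "(\<lambda>n. (1 + inverse (real (Suc n)))^P) \<longlonglongrightarrow> (1 + 0)^P"
    by (intro tendsto_intros LIMSEQ_inverse_real_of_nat)
  have c1: "(1 + 0::real)^P < (1+r)/(2*r)" using r by (simp add: field_simps)
  obtain N where N: "\<And>n. n \<ge> N \<Longrightarrow> (1 + inverse (real (Suc n)))^P < (1+r)/(2*r)"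
    using order_tendstoD(2)[OF lim c1] unfolding eventually_sequentially by blast
  show ?thesis
  proof (rule summable_ratio_test[where c="(1+r)/2" and N=N])
    show "(1+r)/2 < 1" using r by simp
  next
    fix n assume n: "n \<ge> N"
    have e: "real (Suc n) + 1 = (real n + 1) * (1 + inverse (real (Suc n)))"
      by (simp add: field_simps)
    have e2: "(real (Suc n) + 1)^P = (real n + 1)^P * (1 + inverse (real (Suc n)))^P"
      unfolding e by (rule power_mult_distrib)
    have pos: "0 \<le> (real (Suc n) + 1)^P * r^Suc n" using r by simp
    have "norm ((real (Suc n) + 1)^P * r^Suc n) = (real (Suc n) + 1)^P * r^Suc n"
      using pos by simp
    also have "\<dots> = (real n + 1)^P * r^n * ((1 + inverse (real (Suc n)))^P * r)"
      unfolding e2 by (simp add: algebra_simps)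
    also have "\<dots> \<le> (real n + 1)^P * r^n * ((1+r)/(2*r) * r)"
      using N[OF n] r by (intro mult_left_mono mult_right_mono) auto
    also have "\<dots> = (1+r)/2 * norm ((real n + 1)^P * r^n)"
      using r by (simp add: field_simps)
    finally show "norm ((real (Suc n) + 1)^P * r^Suc n) \<le> (1+r)/2 * norm ((real n + 1)^P * r^n)" .
  qed
qed

lemma summable_poly3_geom:
  fixes r :: real
  assumes r: "0 < r" "r < 1"
  shows "summable (\<lambda>j. B * (real j + 3)^P * r^j)"
proof -
  have s1: "summable (\<lambda>j. (real j + 1)^P * r^j)" by (rule summable_poly_geom[OF r])
  have s2: "summable (\<lambda>j. (\<bar>B\<bar> * 3^P) * ((real j + 1)^P * r^j))" by (rule summable_mult[OF s1])
  have b: "norm (B * (real j + 3)^P * r^j) \<le> (\<bar>B\<bar> * 3^P) * ((real j + 1)^P * r^j)" for j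
  proof -
    have "(real j + 3)^P \<le> (3 * (real j + 1))^P" by (intro power_mono) auto
    moreover have "(3 * (real j + 1))^P = 3^P * (real j + 1)^P" by (rule power_mult_distrib)
    ultimately have p: "(real j + 3)^P \<le> 3^P * (real j + 1)^P" by simp
    have "norm (B * (real j + 3)^P * r^j) = \<bar>B\<bar> * (real j + 3)^P * r^j"
      using r by (simp add: abs_mult)
    also have "\<dots> \<le> \<bar>B\<bar> * (3^P * (real j + 1)^P) * r^j"
      using r p by (intro mult_right_mono mult_left_mono) auto
    also have "\<dots> = (\<bar>B\<bar> * 3^P) * ((real j + 1)^P * r^j)" by (simp only: mult.assoc)
    finally show ?thesis .
  qed
  show ?thesis by (rule summable_comparison_test'[OF s2 b])
qed




lemma S_summable:
  assumes m: "0 < m" "2*m \<le> real N" and xy: "\<bar>x\<bar> \<le> 1" "\<bar>y\<bar> \<le> 1" and r: "0 < r" "r < 1"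
  shows "summable (\<lambda>k. fact k / pochhammer (2*m) k * gegenbauer m k x * gegenbauer m k y * r^k)"
proof (rule summable_comparison_test'[OF summable_poly_geom[OF r, of N], of 0])
  fix k :: nat
  define g where "g = pochhammer (2*m) k / fact k"
  have gp: "0 < g" unfolding g_def using m by (simp add: pochhammer_pos)
  have bx: "\<bar>gegenbauer m k x\<bar> \<le> g" using geg_bound[OF m(1) xy(1), of k] unfolding geg_one g_def
    using gp g_def by simp
  have by': "\<bar>gegenbauer m k y\<bar> \<le> g" using geg_bound[OF m(1) xy(2), of k] unfolding geg_one g_def
    using gp g_def by simp
  have e: "fact k / pochhammer (2*m) k = 1/g" unfolding g_def by simp
  have "norm (fact k / pochhammer (2*m) k * gegenbauer m k x * gegenbauer m k y * r^k)
      = (1/g) * \<bar>gegenbauer m k x\<bar> * \<bar>gegenbauer m k y\<bar> * r^k"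
    unfolding e using gp r by (simp add: abs_mult)
  also have "\<dots> \<le> (1/g) * g * g * r^k"
    using gp r bx by' by (intro mult_right_mono mult_mono) auto
  also have "\<dots> = g * r^k" using gp by simp
  also have "\<dots> \<le> (real k + 1)^N * r^k"
    using r poch_bound[of "2*m" N k] m unfolding g_def by (intro mult_right_mono) auto
  finally show "norm (fact k / pochhammer (2*m) k * gegenbauer m k x * gegenbauer m k y * r^k) \<le> (real k + 1)^N * r^k" .
qed

context
  fixes l \<delta> \<rho> c0 :: real
begin

definition "UU j a = (1-a^2) powr (l+3/2) * gegenbauer (l+2) j a"
definition "VV j a = (1-a^2) powr (l+1/2) * gegenbauer (l+1) j a"
definition "WW j a = (1-a^2) powr (l-1/2) * gegenbauer l j a"
definition "Kc j = c0 * (fact j / pochhammer (2*l+4) j) * \<rho>^(j+2)"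
definition "al j = (real j+1)*(real j+1+2*(l+1))/(2*(l+1))"
definition "be j = (real j+2)*(real j+2+2*l)/(2*l)"
definition "hh j s = Kc j * (UU j (\<delta> * s) * gegenbauer l (j+2) s)"
definition "h1 j s = Kc j * (-(al j) * \<delta> * VV (j+1) (\<delta> * s) * gegenbauer l (j+2) s
                 + 2*l * UU j (\<delta> * s) * gegenbauer (l+1) (j+1) s)"
definition "h2 j s = Kc j * (\<delta>^2 * al j * be j * WW (j+2) (\<delta> * s) * gegenbauer l (j+2) s
                 - 4*l*\<delta>*al j * VV (j+1) (\<delta> * s) * gegenbauer (l+1) (j+1) s
                 + 4*l*(l+1) * UU j (\<delta> * s) * gegenbauer (l+2) j s)"

lemma dUU:
  assumes "0 < l" "\<bar>a\<bar> < 1"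
  shows "(UU j has_real_derivative -(al j) * VV (j+1) a) (at a)"
proof -
  have e1: "l+1+1/2 = l+3/2" "l+1+1 = l+2" "l+1-1/2 = l+1/2" by simp_all
  have l1: "0 < l + 1" using assms by simp
  have f: "UU j = (\<lambda>a. (1-a^2) powr (l+1+1/2) * gegenbauer (l+1+1) j a)"
    by (rule ext) (simp only: UU_def e1)
  have X: "(UU j has_real_derivative -(real j+1)*(real j+1+2*(l+1))/(2*(l+1)) * ((1-a^2) powr (l+1-1/2) * gegenbauer (l+1) (Suc j) a)) (at a)"
    unfolding f by (rule rod_deriv[OF l1 assms(2)])
  have v: "-(real j+1)*(real j+1+2*(l+1))/(2*(l+1)) * ((1-a^2) powr (l+1-1/2) * gegenbauer (l+1) (Suc j) a) = -(al j) * VV (j+1) a"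
  proof -
    have nz: "2*(l+1) \<noteq> 0" using assms by simp
    show ?thesis by (simp only: al_def VV_def e1) (use nz in \<open>simp add: field_simps\<close>)
  qed
  show ?thesis using X unfolding v .
qed

lemma dVV:
  assumes "0 < l" "\<bar>a\<bar> < 1"
  shows "(VV (j+1) has_real_derivative -(be j) * WW (j+2) a) (at a)"
proof -
  have f: "VV (j+1) = (\<lambda>a. (1-a^2) powr (l+1/2) * gegenbauer (l+1) (j+1) a)"
    by (rule ext) (simp only: VV_def)
  have X: "(VV (j+1) has_real_derivative -(real (j+1)+1)*(real (j+1)+1+2*l)/(2*l) * ((1-a^2) powr (l-1/2) * gegenbauer l (Suc (j+1)) a)) (at a)"
    unfolding f by (rule rod_deriv[OF assms])
  have v: "-(real (j+1)+1)*(real (j+1)+1+2*l)/(2*l) * ((1-a^2) powr (l-1/2) * gegenbauer l (Suc (j+1)) a) = -(be j) * WW (j+2) a"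
  proof -
    have nz: "2*l \<noteq> 0" using assms by simp
    show ?thesis by (simp add: be_def WW_def) (use nz in \<open>simp add: field_simps\<close>)
  qed
  show ?thesis using X unfolding v .
qed

lemma dC2: "(gegenbauer l (j+2) has_real_derivative 2*l*gegenbauer (l+1) (j+1) s) (at s)"
  using geg_deriv_Suc[of l "j+1" s] by simp

lemma dC1: "(gegenbauer (l+1) (j+1) has_real_derivative 2*(l+1)*gegenbauer (l+2) j s) (at s)"
proof -
  have e: "l+1+1 = l+2" by simp
  show ?thesis using geg_deriv_Suc[of "l+1" j s] unfolding e by simp
qed

lemma dhh:
  assumes "0 < l" "\<bar>\<delta>\<bar> < 1" "-1 < s" "s < 1"
  shows "(hh j has_real_derivative h1 j s) (at s)"
proof -
  have a: "\<bar>\<delta> * s\<bar> < 1" using small_mult[OF assms(2-4)] by auto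
  have dU: "((\<lambda>s. UU j (\<delta> * s)) has_real_derivative (-(al j) * VV (j+1) (\<delta> * s)) * \<delta>) (at s)"
    by (rule DERIV_chain2[where f="UU j" and g="\<lambda>s. \<delta> * s", OF dUU[OF assms(1) a]]) (auto intro!: derivative_eq_intros)
  have "(hh j has_real_derivative Kc j * ((-(al j) * VV (j+1) (\<delta> * s)) * \<delta> * gegenbauer l (j+2) s
        + 2*l*gegenbauer (l+1) (j+1) s * UU j (\<delta> * s))) (at s)"
    unfolding hh_def[abs_def] by (intro DERIV_cmult DERIV_mult dU dC2)
  thus ?thesis by (simp add: h1_def algebra_simps)
qed

lemma dh1:
  assumes "0 < l" "\<bar>\<delta>\<bar> < 1" "-1 < s" "s < 1"
  shows "(h1 j has_real_derivative h2 j s) (at s)"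
proof -
  have a: "\<bar>\<delta> * s\<bar> < 1" using small_mult[OF assms(2-4)] by auto
  have dU: "((\<lambda>s. UU j (\<delta> * s)) has_real_derivative (-(al j) * VV (j+1) (\<delta> * s)) * \<delta>) (at s)"
    by (rule DERIV_chain2[where f="UU j" and g="\<lambda>s. \<delta> * s", OF dUU[OF assms(1) a]]) (auto intro!: derivative_eq_intros)
  have dV: "((\<lambda>s. VV (j+1) (\<delta> * s)) has_real_derivative (-(be j) * WW (j+2) (\<delta> * s)) * \<delta>) (at s)"
    by (rule DERIV_chain2[where f="VV (j+1)" and g="\<lambda>s. \<delta> * s", OF dVV[OF assms(1) a]]) (auto intro!: derivative_eq_intros)
  have "(h1 j has_real_derivative Kc j * (
      (-(al j) * \<delta> * ((-(be j) * WW (j+2) (\<delta> * s)) * \<delta>) * gegenbauer l (j+2) s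
        + 2*l*gegenbauer (l+1) (j+1) s * (-(al j) * \<delta> * VV (j+1) (\<delta> * s)))
      + (2*l * ((-(al j) * VV (j+1) (\<delta> * s)) * \<delta>) * gegenbauer (l+1) (j+1) s
        + 2*(l+1)*gegenbauer (l+2) j s * (2*l * UU j (\<delta> * s))))) (at s)"
    unfolding h1_def[abs_def]
    by (intro DERIV_cmult DERIV_add DERIV_mult dU dV dC2 dC1)
  thus ?thesis by (simp add: h2_def algebra_simps power2_eq_square)
qed

context
  assumes hl: "1/2 \<le> l" and hd: "\<bar>\<delta>\<bar> < 1" and hr0: "0 < \<rho>" and hr1: "\<rho> < 1"
begin

definition "NN = nat \<lceil>2*l+4\<rceil>"

lemma NN: "2*(l+2) \<le> real NN"
  unfolding NN_def using real_nat_ceiling_ge[of "2*l+4"] by simp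

lemma bndW:
  assumes "0 \<le> p" "m \<in> {l, l+1, l+2}" "\<bar>a\<bar> \<le> 1" "k \<le> j+2"
  shows "\<bar>(1-a^2) powr p * gegenbauer m k a\<bar> \<le> (real j+3)^NN"
proof -
  have "\<bar>(1-a^2) powr p * gegenbauer m k a\<bar> \<le> (real k+1)^NN"
    using assms hl NN by (intro wgeg_bound) auto
  also have "\<dots> \<le> (real j+3)^NN" using assms by (intro power_mono) auto
  finally show ?thesis .
qed

lemma bndC:
  assumes "m \<in> {l, l+1, l+2}" "\<bar>a\<bar> \<le> 1" "k \<le> j+2"
  shows "\<bar>gegenbauer m k a\<bar> \<le> (real j+3)^NN"
proof -
  have "\<bar>gegenbauer m k a\<bar> \<le> (real k+1)^NN"
    using assms hl NN by (intro geg_poly_bound) auto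
  also have "\<dots> \<le> (real j+3)^NN" using assms by (intro power_mono) auto
  finally show ?thesis .
qed

lemma bndK: "\<bar>Kc j\<bar> \<le> \<bar>c0\<bar> * \<rho>^j"
proof -
  have l4: "1 \<le> 2*l+4" using hl by simp
  have f1: "\<bar>fact j / pochhammer (2*l+4) j\<bar> \<le> 1"
    using fact_poch_le[OF l4, of j] pochhammer_pos[of "2*l+4" j] hl by simp
  have r: "\<bar>\<rho>^(j+2)\<bar> \<le> \<rho>^j"
  proof -
    have "\<rho>^(j+2) = \<rho>^j * \<rho>^2" by (rule power_add)
    moreover have "\<rho>^2 \<le> 1" using hr0 hr1 by (simp add: power_le_one)
    ultimately have "\<rho>^(j+2) \<le> \<rho>^j" using hr0 by (simp add: mult_left_le)
    thus ?thesis using hr0 by simp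
  qed
  have "\<bar>Kc j\<bar> = \<bar>c0\<bar> * \<bar>fact j / pochhammer (2*l+4) j\<bar> * \<bar>\<rho>^(j+2)\<bar>"
    by (simp add: Kc_def abs_mult)
  also have "\<dots> \<le> \<bar>c0\<bar> * 1 * \<rho>^j"
    using f1 r by (intro mult_mono) auto
  finally show ?thesis by simp
qed

lemma bnd_al: "0 \<le> al j" "al j \<le> (real j+3)^2"
proof -
  show "0 \<le> al j" using hl by (simp add: al_def)
  have "(real j+1+2*(l+1))/(2*(l+1)) = (real j + 1)/(2*(l+1)) + 1" using hl by (simp add: field_simps)
  also have "\<dots> \<le> (real j + 1)/1 + 1"
    using hl by (intro add_right_mono divide_left_mono) auto
  finally have "(real j+1+2*(l+1))/(2*(l+1)) \<le> real j + 3" by simp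
  hence "al j \<le> (real j+1) * (real j+3)" unfolding al_def
    by (simp only: times_divide_eq_right[symmetric]) (rule mult_left_mono, auto)
  also have "\<dots> \<le> (real j+3)^2" by (simp add: power2_eq_square mult_right_mono)
  finally show "al j \<le> (real j+3)^2" .
qed

lemma bnd_be: "0 \<le> be j" "be j \<le> (real j+3)^2"
proof -
  show "0 \<le> be j" using hl by (simp add: be_def)
  have "(real j+2+2*l)/(2*l) = (real j + 2)/(2*l) + 1" using hl by (simp add: field_simps)
  also have "\<dots> \<le> (real j + 2)/1 + 1"
    using hl by (intro add_right_mono divide_left_mono) auto
  finally have "(real j+2+2*l)/(2*l) \<le> real j + 3" by simp
  hence "be j \<le> (real j+2) * (real j+3)" unfolding be_def
    by (simp only: times_divide_eq_right[symmetric]) (rule mult_left_mono, auto)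
  also have "\<dots> \<le> (real j+3)^2" by (simp add: power2_eq_square mult_right_mono)
  finally show "be j \<le> (real j+3)^2" .
qed

definition "MM j = (\<bar>c0\<bar> * (1 + 4*l + 4*l*(l+1))) * (real j + 3)^(2*NN+4) * \<rho>^j"

lemma summable_MM: "summable MM"
  unfolding MM_def[abs_def] by (rule summable_poly3_geom[OF hr0 hr1])

lemma bnd_terms:
  assumes s: "-1 < s" "s < 1"
  shows "\<bar>hh j s\<bar> \<le> MM j" "\<bar>h1 j s\<bar> \<le> MM j" "\<bar>h2 j s\<bar> \<le> MM j"
proof -
  define Q where "Q = real j + 3"
  define E where "E = Q^NN"
  define BC where "BC = 1 + 4*l + 4*l*(l+1)"
  have Q1: "1 \<le> Q" by (simp add: Q_def)
  have E0: "0 \<le> E" using Q1 by (simp add: E_def)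
  have l0: "0 < l" using hl by simp
  have a: "\<bar>\<delta> * s\<bar> \<le> 1" using small_mult[OF hd s] by auto
  have s1: "\<bar>s\<bar> \<le> 1" using s by auto
  have d1: "\<bar>\<delta>\<bar> \<le> 1" using hd by simp
  have d2: "\<bar>\<delta>^2\<bar> \<le> 1" using hd by (simp add: abs_square_le_1)
  have bU: "\<bar>UU j (\<delta> * s)\<bar> \<le> E" unfolding UU_def E_def Q_def
    by (rule bndW) (use hl a in auto)
  have bV: "\<bar>VV (j+1) (\<delta> * s)\<bar> \<le> E" unfolding VV_def E_def Q_def
    by (rule bndW) (use hl a in auto)
  have bW: "\<bar>WW (j+2) (\<delta> * s)\<bar> \<le> E" unfolding WW_def E_def Q_def
    by (rule bndW) (use hl a in auto)
  have bC0: "\<bar>gegenbauer l (j+2) s\<bar> \<le> E" unfolding E_def Q_def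
    by (rule bndC) (use s1 in auto)
  have bC1: "\<bar>gegenbauer (l+1) (j+1) s\<bar> \<le> E" unfolding E_def Q_def
    by (rule bndC) (use s1 in auto)
  have bC2: "\<bar>gegenbauer (l+2) j s\<bar> \<le> E" unfolding E_def Q_def
    by (rule bndC) (use s1 in auto)
  have bal: "\<bar>al j\<bar> \<le> Q^2" using bnd_al[of j] by (simp add: Q_def)
  have bbe: "\<bar>be j\<bar> \<le> Q^2" using bnd_be[of j] by (simp add: Q_def)
  have Q24: "Q^2 \<le> Q^4" using Q1 by (intro power_increasing) auto
  have Q04: "1 \<le> Q^4" using Q1 by simp
  have BC: "1 \<le> BC" using l0 by (simp add: BC_def)
  have fin: "\<bar>Kc j * X\<bar> \<le> MM j" if X: "\<bar>X\<bar> \<le> BC * Q^4 * E * E" for X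
  proof -
    have "\<bar>Kc j * X\<bar> \<le> (\<bar>c0\<bar> * \<rho>^j) * (BC * Q^4 * E * E)"
      by (rule abs_mult_le[OF bndK X])
    also have "\<dots> = MM j"
      unfolding MM_def BC_def E_def Q_def by (simp add: power_add[symmetric] mult_2 algebra_simps)
    finally show ?thesis .
  qed
  have EE: "0 \<le> E * E" using E0 by simp
  have sc: "x * (E * E) \<le> BC * Q^4 * E * E" if "x \<le> BC * Q^4" for x
    using mult_right_mono[OF that EE] by (simp add: algebra_simps)
  have BQ: "BC * Q^4 = Q^4 + 4*l*Q^4 + 4*l*(l+1)*Q^4" by (simp add: BC_def algebra_simps)
  have lQ: "l \<le> l * Q^4" using l0 Q04 by (simp add: mult_le_cancel_left1)
  have p1: "0 \<le> l*(l+1)*Q^4" using l0 Q04 by simp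
  show "\<bar>hh j s\<bar> \<le> MM j" unfolding hh_def
  proof (rule fin)
    have "\<bar>UU j (\<delta> * s) * gegenbauer l (j+2) s\<bar> \<le> E * E" by (rule abs_mult_le[OF bU bC0])
    also have "\<dots> = 1 * (E * E)" by simp
    also have "\<dots> \<le> BC * Q^4 * E * E" by (rule sc) (use BQ Q04 lQ p1 l0 in linarith)
    finally show "\<bar>UU j (\<delta> * s) * gegenbauer l (j+2) s\<bar> \<le> BC * Q^4 * E * E" .
  qed
  show "\<bar>h1 j s\<bar> \<le> MM j" unfolding h1_def
  proof (rule fin)
    have t1: "\<bar>-(al j) * \<delta> * VV (j+1) (\<delta> * s) * gegenbauer l (j+2) s\<bar> \<le> Q^2 * 1 * E * E"
      using bal d1 bV bC0 by (intro abs_mult_le) auto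
    have t2: "\<bar>2*l * UU j (\<delta> * s) * gegenbauer (l+1) (j+1) s\<bar> \<le> 2 * l * E * E"
      using bU bC1 l0 by (intro abs_mult_le) auto
    have "\<bar>-(al j) * \<delta> * VV (j+1) (\<delta> * s) * gegenbauer l (j+2) s + 2*l * UU j (\<delta> * s) * gegenbauer (l+1) (j+1) s\<bar>
       \<le> Q^2 * 1 * E * E + 2 * l * E * E"
      using t1 t2 abs_triangle_ineq[of "-(al j) * \<delta> * VV (j+1) (\<delta> * s) * gegenbauer l (j+2) s"
          "2*l * UU j (\<delta> * s) * gegenbauer (l+1) (j+1) s"] by linarith
    also have "\<dots> = (Q^2 + 2*l) * (E * E)" by (simp add: algebra_simps)
    also have "\<dots> \<le> BC * Q^4 * E * E" by (rule sc) (use BQ Q24 lQ p1 l0 in linarith)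
    finally show "\<bar>-(al j) * \<delta> * VV (j+1) (\<delta> * s) * gegenbauer l (j+2) s + 2*l * UU j (\<delta> * s) * gegenbauer (l+1) (j+1) s\<bar>
       \<le> BC * Q^4 * E * E" .
  qed
  show "\<bar>h2 j s\<bar> \<le> MM j" unfolding h2_def
  proof (rule fin)
    define T1 where "T1 = \<delta>^2 * al j * be j * WW (j+2) (\<delta> * s) * gegenbauer l (j+2) s"
    define T2 where "T2 = 4*l*\<delta>*al j * VV (j+1) (\<delta> * s) * gegenbauer (l+1) (j+1) s"
    define T3 where "T3 = 4*l*(l+1) * UU j (\<delta> * s) * gegenbauer (l+2) j s"
    have t1: "\<bar>T1\<bar> \<le> 1 * Q^2 * Q^2 * E * E"
      unfolding T1_def using d2 bal bbe bW bC0 by (intro abs_mult_le) auto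
    have t2: "\<bar>T2\<bar> \<le> 4 * l * 1 * Q^2 * E * E"
      unfolding T2_def using d1 bal bV bC1 l0 by (intro abs_mult_le) auto
    have t3: "\<bar>T3\<bar> \<le> 4 * l * (l+1) * E * E"
      unfolding T3_def using bU bC2 l0 by (intro abs_mult_le) auto
    have "\<bar>T1 - T2 + T3\<bar> \<le> 1 * Q^2 * Q^2 * E * E + 4 * l * 1 * Q^2 * E * E + 4 * l * (l+1) * E * E"
      using t1 t2 t3 abs_triangle_ineq[of "T1 - T2" T3] abs_triangle_ineq4[of T1 T2] by linarith
    also have "\<dots> = (Q^2 * Q^2 + 4*l*Q^2 + 4*l*(l+1)) * (E * E)" by (simp add: algebra_simps)
    also have "\<dots> \<le> BC * Q^4 * E * E"
    proof (rule sc)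
      have "Q^2 * Q^2 = Q^4" by (simp add: power_add[symmetric])
      moreover have "l * Q^2 \<le> l * Q^4" using Q24 l0 by simp
      moreover have "l*(l+1) \<le> l*(l+1)*Q^4"
      proof -
        have lp: "0 < l*(l+1)" using l0 by simp
        show ?thesis using Q04 lp by (simp add: mult_le_cancel_left1)
      qed
      ultimately show "Q^2 * Q^2 + 4*l*Q^2 + 4*l*(l+1) \<le> BC * Q^4" using BQ by linarith
    qed
    finally show "\<bar>T1 - T2 + T3\<bar> \<le> BC * Q^4 * E * E" .
  qed
qed
lemma hh_summable: "-1 < s \<Longrightarrow> s < 1 \<Longrightarrow> summable (\<lambda>j. hh j s)"
  by (rule summable_comparison_test'[OF summable_MM, of 0]) (use bnd_terms in auto)

lemma h1_summable: "-1 < s \<Longrightarrow> s < 1 \<Longrightarrow> summable (\<lambda>j. h1 j s)"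
  by (rule summable_comparison_test'[OF summable_MM, of 0]) (use bnd_terms in auto)

lemma h2_summable: "-1 < s \<Longrightarrow> s < 1 \<Longrightarrow> summable (\<lambda>j. h2 j s)"
  by (rule summable_comparison_test'[OF summable_MM, of 0]) (use bnd_terms in auto)

lemma H_series:
  assumes t: "-1 < t" "t < 1"
  shows "deriv (deriv (\<lambda>s. \<Sum>j. hh j s)) t = (\<Sum>j. h2 j t)"
proof -
  define S where "S = {-1<..<(1::real)}"
  have conv: "convex S" unfolding S_def by (rule convex_real_interval)
  have intS: "interior S = S" unfolding S_def by (simp add: interior_open)
  have l0: "0 < l" using hl by simp
  have d1: "(hh n has_field_derivative h1 n x) (at x within S)" if "x \<in> S" for n x
    using dhh[OF l0 hd, of x n] that unfolding S_def by (auto intro: has_field_derivative_at_within)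
  have d2: "(h1 n has_field_derivative h2 n x) (at x within S)" if "x \<in> S" for n x
    using dh1[OF l0 hd, of x n] that unfolding S_def by (auto intro: has_field_derivative_at_within)
  have u1: "uniformly_convergent_on S (\<lambda>n x. \<Sum>i<n. h1 i x)"
    by (rule Weierstrass_m_test'[OF _ summable_MM]) (use bnd_terms in \<open>auto simp: S_def\<close>)
  have u2: "uniformly_convergent_on S (\<lambda>n x. \<Sum>i<n. h2 i x)"
    by (rule Weierstrass_m_test'[OF _ summable_MM]) (use bnd_terms in \<open>auto simp: S_def\<close>)
  have x0: "0 \<in> S" unfolding S_def by simp
  have D1: "((\<lambda>x. \<Sum>n. hh n x) has_field_derivative (\<Sum>n. h1 n x)) (at x)" if "-1 < x" "x < 1" for x
    by (rule has_field_derivative_series'(2)[OF conv d1 u1 x0 hh_summable])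
       (use that in \<open>auto simp: intS S_def\<close>)
  have D2: "((\<lambda>x. \<Sum>n. h1 n x) has_field_derivative (\<Sum>n. h2 n t)) (at t)"
    by (rule has_field_derivative_series'(2)[OF conv d2 u2 x0 h1_summable])
       (use t in \<open>auto simp: intS S_def\<close>)
  show ?thesis by (rule deriv2_helper[OF D1 D2 t])
qed

lemma poch_facts:
  shows "pochhammer (2*l) (j+2) = 2*l*(2*l+1)*pochhammer (2*l+2) j"
    and "pochhammer (2*l+2) j * (2*l+2+real j) * (2*l+3+real j) = (2*l+2)*(2*l+3)*pochhammer (2*l+4) j"
    and "pochhammer (2*l+2) (j+1) = (2*l+2)*pochhammer (2*l+3) j"
    and "pochhammer (2*l+3) j * (2*l+3+real j) = (2*l+3)*pochhammer (2*l+4) j"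
proof -
  show "pochhammer (2*l) (j+2) = 2*l*(2*l+1)*pochhammer (2*l+2) j"
    by (simp add: pochhammer_rec numeral_2_eq_2 algebra_simps)
  have a: "pochhammer (2*l+2) (Suc (Suc j)) = pochhammer (2*l+2) j * (2*l+2+real j) * (2*l+3+real j)"
    by (simp add: pochhammer_Suc algebra_simps)
  have b: "pochhammer (2*l+2) (Suc (Suc j)) = (2*l+2)*(2*l+3)*pochhammer (2*l+4) j"
    by (simp add: pochhammer_rec algebra_simps)
  show "pochhammer (2*l+2) j * (2*l+2+real j) * (2*l+3+real j) = (2*l+2)*(2*l+3)*pochhammer (2*l+4) j"
    using a b by simp
  show "pochhammer (2*l+2) (j+1) = (2*l+2)*pochhammer (2*l+3) j"
    by (simp add: pochhammer_rec algebra_simps)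
  have c: "pochhammer (2*l+3) (Suc j) = pochhammer (2*l+3) j * (2*l+3+real j)"
    by (simp add: pochhammer_Suc algebra_simps)
  have d: "pochhammer (2*l+3) (Suc j) = (2*l+3)*pochhammer (2*l+4) j"
    by (simp add: pochhammer_rec algebra_simps)
  show "pochhammer (2*l+3) j * (2*l+3+real j) = (2*l+3)*pochhammer (2*l+4) j"
    using c d by simp
qed

lemma scalarA:
  assumes hc0: "c0 = 2/((2*l+1)*(2*l+3))"
  shows "c0 * (fact j / pochhammer (2*l+4) j) * al j * be j = 2 * fact (j+2) / pochhammer (2*l) (j+2)"
proof -
  have l0: "0 < l" using hl by simp
  define p2 where "p2 = pochhammer (2*l+2) j"
  define p4 where "p4 = pochhammer (2*l+4) j"
  define F where "F = (fact j :: real)"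
  have p4p: "0 < p4" unfolding p4_def using l0 by (intro pochhammer_pos) simp
  have Fp: "0 < F" unfolding F_def by simp
  have X: "0 < (2*l+2+real j)*(2*l+3+real j)" using l0 by simp
  have p2e: "p2 = (2*l+2)*(2*l+3)*p4 / ((2*l+2+real j)*(2*l+3+real j))"
    using poch_facts(2)[of j] X unfolding p2_def p4_def by (simp add: field_simps)
  have fj: "fact (j+2) = (real j+2)*(real j+1)*F"
    unfolding F_def by (simp add: fact_Suc numeral_2_eq_2 algebra_simps)
  show ?thesis
    unfolding poch_facts(1) fj hc0 al_def be_def p2_def[symmetric] p4_def[symmetric] F_def[symmetric] p2e
    using l0 p4p Fp X by (simp add: field_simps)
qed

lemma scalarB:
  assumes hc0: "c0 = 2/((2*l+1)*(2*l+3))" and hdr: "\<delta>*(l+1) = l*\<rho>"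
  shows "c0 * (fact j / pochhammer (2*l+4) j) * \<rho> * (4*l*\<delta>*al j) =
     4*(2*l+2)*\<delta>^2/(2*l+1) * (fact (j+1) / pochhammer (2*l+2) (j+1))"
proof -
  have l0: "0 < l" using hl by simp
  define p4 where "p4 = pochhammer (2*l+4) j"
  define F where "F = (fact j :: real)"
  define A where "A = 2*l+1"
  define B where "B = 2*l+3"
  define Z where "Z = 2*l+3+real j"
  have p4p: "0 < p4" unfolding p4_def using l0 by (intro pochhammer_pos) simp
  have Fp: "0 < F" unfolding F_def by simp
  have Ap: "0 < A" "0 < B" "0 < Z" using l0 by (simp_all add: A_def B_def Z_def)
  have p3e: "pochhammer (2*l+3) j = B*p4 / Z"
    using poch_facts(4)[of j] Ap unfolding p4_def B_def Z_def by (simp add: field_simps)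
  have fj: "fact (j+1) = (real j+1)*F"
    unfolding F_def by (simp add: fact_Suc algebra_simps)
  define L1 where "L1 = l+1"
  have L1p: "0 < L1" using l0 by (simp add: L1_def)
  have rho: "\<rho> = \<delta>*L1/l" using hdr l0 by (simp add: field_simps L1_def)
  have ale: "al j = (real j+1)*Z/(2*L1)" unfolding al_def Z_def L1_def by (simp add: algebra_simps)
  have c0e: "c0 = 2/(A*B)" unfolding hc0 A_def B_def ..
  have e2: "2*l+2 = 2*L1" by (simp add: L1_def)
  show ?thesis
    unfolding poch_facts(3) unfolding p3e fj c0e ale unfolding p4_def[symmetric] F_def[symmetric] rho e2 A_def[symmetric]
    using l0 p4p Fp Ap L1p by (simp add: field_simps power2_eq_square)
qed

lemma scalarC:
  assumes hc0: "c0 = 2/((2*l+1)*(2*l+3))" and hdr: "\<delta>*(l+1) = l*\<rho>"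
  shows "c0 * \<rho>^2 * (4*l*(l+1)) = 2*(2*l+2)^3*\<delta>^2/((2*l+3)*(2*l+1)*(2*l))"
proof -
  have l0: "0 < l" using hl by simp
  define A where "A = 2*l+1"
  define B where "B = 2*l+3"
  have Ap: "0 < A" "0 < B" using l0 by (simp_all add: A_def B_def)
  have rho: "\<rho> = \<delta>*(l+1)/l" using hdr l0 by (simp add: field_simps)
  have c0e: "c0 = 2/(A*B)" unfolding hc0 A_def B_def ..
  have e2: "2*l+2 = 2*(l+1)" by simp
  show ?thesis unfolding rho c0e e2 A_def[symmetric] B_def[symmetric]
    using l0 Ap by (simp add: field_simps power2_eq_square power3_eq_cube)
qed

lemma H_final:
  assumes hc0: "c0 = 2/((2*l+1)*(2*l+3))" and hdr: "\<delta>*(l+1) = l*\<rho>" and t: "-1 < t" "t < 1"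
  shows "2*\<delta>^2*(1-(\<delta>*t)^2) powr (l-1/2)
       + (-2*(2*l*\<rho>)*\<delta>*(1-(\<delta>*t)^2) powr (l-1/2+1)/(l-1/2+1) + 2*(2*l*\<rho>)*t*\<delta>^2*((\<delta>*t)*(1-(\<delta>*t)^2) powr (l-1/2)))
       + (\<Sum>j. h2 j t)
     = 2*\<delta>^2*(1-(\<delta>*t)^2) powr (l-1/2) *
         (\<Sum>k. fact k / pochhammer (2*l) k * gegenbauer l k (\<delta>*t) * gegenbauer l k t * \<rho>^k)
       - 4*(2*l+2)*\<delta>^2/(2*l+1)*(1-(\<delta>*t)^2) powr (l+1/2) *
         (\<Sum>k. fact k / pochhammer (2*l+2) k * gegenbauer (l+1) k (\<delta>*t) * gegenbauer (l+1) k t * \<rho>^k)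
       + 2*(2*l+2)^3*\<delta>^2/((2*l+3)*(2*l+1)*(2*l)) * (1-(\<delta>*t)^2) powr (l+3/2) *
         (\<Sum>k. fact k / pochhammer (2*l+4) k * gegenbauer (l+2) k (\<delta>*t) * gegenbauer (l+2) k t * \<rho>^k)"
proof -
  have l0: "0 < l" using hl by simp
  define a where "a = \<delta>*t"
  have a1: "\<bar>a\<bar> \<le> 1" using small_mult[OF hd t] by (auto simp: a_def)
  have t1: "\<bar>t\<bar> \<le> 1" using t by auto
  define S1 where "S1 = (\<lambda>k. fact k / pochhammer (2*l) k * gegenbauer l k a * gegenbauer l k t * \<rho>^k)"
  define S2 where "S2 = (\<lambda>k. fact k / pochhammer (2*l+2) k * gegenbauer (l+1) k a * gegenbauer (l+1) k t * \<rho>^k)"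
  define S3 where "S3 = (\<lambda>k. fact k / pochhammer (2*l+4) k * gegenbauer (l+2) k a * gegenbauer (l+2) k t * \<rho>^k)"
  have sS1: "summable S1" unfolding S1_def
    by (rule S_summable[OF l0 _ a1 t1 hr0 hr1, of NN]) (use NN in simp)
  have e12: "2*(l+1) = 2*l+2" "2*(l+2) = 2*l+4" by simp_all
  have sS2: "summable S2"
    using S_summable[OF _ _ a1 t1 hr0 hr1, of "l+1" NN] NN l0 unfolding S2_def e12 by simp
  have sS3: "summable S3"
    using S_summable[OF _ _ a1 t1 hr0 hr1, of "l+2" NN] NN l0 unfolding S3_def e12 by simp
  define q where "q = 1 - a^2"
  define K1 where "K1 = 2*\<delta>^2*q powr (l-1/2)"
  define K2 where "K2 = 4*(2*l+2)*\<delta>^2/(2*l+1)*q powr (l+1/2)"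
  define K3 where "K3 = 2*(2*l+2)^3*\<delta>^2/((2*l+3)*(2*l+1)*(2*l)) * q powr (l+3/2)"
  have h2e: "h2 j t = K1 * S1 (j+2) - K2 * S2 (j+1) + K3 * S3 j" for j
  proof -
    have A: "Kc j * (\<delta>^2 * al j * be j * WW (j+2) a * gegenbauer l (j+2) t) = K1 * S1 (j+2)"
    proof -
      have "Kc j * (\<delta>^2 * al j * be j * WW (j+2) a * gegenbauer l (j+2) t)
          = (c0 * (fact j / pochhammer (2*l+4) j) * al j * be j) * (\<delta>^2*q powr (l-1/2)) * gegenbauer l (j+2) a * gegenbauer l (j+2) t * \<rho>^(j+2)"
        by (simp add: Kc_def WW_def q_def algebra_simps)
      also have "c0 * (fact j / pochhammer (2*l+4) j) * al j * be j = 2 * (fact (j+2) / pochhammer (2*l) (j+2))"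
        using scalarA[OF hc0, of j] by simp
      also have "2 * (fact (j+2) / pochhammer (2*l) (j+2)) * (\<delta>^2*q powr (l-1/2)) * gegenbauer l (j+2) a * gegenbauer l (j+2) t * \<rho>^(j+2) = K1 * S1 (j+2)"
        by (simp only: K1_def S1_def mult_ac)
      finally show ?thesis .
    qed
    have B: "Kc j * (4*l*\<delta>*al j * VV (j+1) a * gegenbauer (l+1) (j+1) t) = K2 * S2 (j+1)"
    proof -
      have "Kc j * (4*l*\<delta>*al j * VV (j+1) a * gegenbauer (l+1) (j+1) t)
          = (c0 * (fact j / pochhammer (2*l+4) j) * \<rho> * (4*l*\<delta>*al j)) * q powr (l+1/2) * gegenbauer (l+1) (j+1) a * gegenbauer (l+1) (j+1) t * \<rho>^(j+1)"
        by (simp add: Kc_def VV_def q_def algebra_simps)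
      also have "c0 * (fact j / pochhammer (2*l+4) j) * \<rho> * (4*l*\<delta>*al j) = 4*(2*l+2)*\<delta>^2/(2*l+1) * (fact (j+1) / pochhammer (2*l+2) (j+1))"
        by (rule scalarB[OF hc0 hdr])
      also have "4*(2*l+2)*\<delta>^2/(2*l+1) * (fact (j+1) / pochhammer (2*l+2) (j+1)) * q powr (l+1/2) * gegenbauer (l+1) (j+1) a * gegenbauer (l+1) (j+1) t * \<rho>^(j+1) = K2 * S2 (j+1)"
        by (simp only: K2_def S2_def mult_ac)
      finally show ?thesis .
    qed
    have C: "Kc j * (4*l*(l+1) * UU j a * gegenbauer (l+2) j t) = K3 * S3 j"
    proof -
      have "Kc j * (4*l*(l+1) * UU j a * gegenbauer (l+2) j t)
          = (c0 * \<rho>^2 * (4*l*(l+1))) * q powr (l+3/2) * (fact j / pochhammer (2*l+4) j) * gegenbauer (l+2) j a * gegenbauer (l+2) j t * \<rho>^j"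
        by (simp add: Kc_def UU_def q_def power_add power2_eq_square algebra_simps)
      also have "c0 * \<rho>^2 * (4*l*(l+1)) = 2*(2*l+2)^3*\<delta>^2/((2*l+3)*(2*l+1)*(2*l))"
        by (rule scalarC[OF hc0 hdr])
      also have "2*(2*l+2)^3*\<delta>^2/((2*l+3)*(2*l+1)*(2*l)) * q powr (l+3/2) * (fact j / pochhammer (2*l+4) j) * gegenbauer (l+2) j a * gegenbauer (l+2) j t * \<rho>^j = K3 * S3 j"
        by (simp only: K3_def S3_def mult_ac)
      finally show ?thesis .
    qed
    show ?thesis unfolding h2_def a_def[symmetric] using A B C by (simp add: algebra_simps)
  qed
  have sA: "summable (\<lambda>j. K1 * S1 (j+2))"
    by (rule summable_mult) (use sS1 summable_iff_shift[of S1 2] in simp)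
  have sB: "summable (\<lambda>j. K2 * S2 (j+1))"
    by (rule summable_mult) (use sS2 summable_iff_shift[of S2 1] in simp)
  have sC: "summable (\<lambda>j. K3 * S3 j)" by (rule summable_mult[OF sS3])
  have "(\<Sum>j. h2 j t) = (\<Sum>j. K1 * S1 (j+2)) - (\<Sum>j. K2 * S2 (j+1)) + (\<Sum>j. K3 * S3 j)"
    unfolding h2e using sA sB sC by (simp add: suminf_add suminf_diff summable_diff)
  also have "\<dots> = K1 * (\<Sum>j. S1 (j+2)) - K2 * (\<Sum>j. S2 (j+1)) + K3 * (\<Sum>j. S3 j)"
    using sS1 sS2 sS3 summable_iff_shift[of S1 2] summable_iff_shift[of S2 1]
    by (simp add: suminf_mult)
  also have "(\<Sum>j. S1 (j+2)) = (\<Sum>j. S1 j) - S1 0 - S1 1"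
    using suminf_split_initial_segment[OF sS1, of 2] by (simp add: numeral_2_eq_2)
  also have "(\<Sum>j. S2 (j+1)) = (\<Sum>j. S2 j) - S2 0"
    using suminf_split_initial_segment[OF sS2, of 1] by simp
  finally have hsum: "(\<Sum>j. h2 j t) = K1 * ((\<Sum>j. S1 j) - S1 0 - S1 1) - K2 * ((\<Sum>j. S2 j) - S2 0) + K3 * (\<Sum>j. S3 j)" .
  have S10: "S1 0 = 1" by (simp add: S1_def)
  have S11: "S1 1 = 2*l*a*t*\<rho>" using l0 by (simp add: S1_def geg_1)
  have S20: "S2 0 = 1" by (simp add: S2_def)
  have rel: "2*(2*l*\<rho>)*\<delta>/(l-1/2+1) = 4*(2*l+2)*\<delta>^2/(2*l+1)"
  proof -
    have "2*l*\<rho> = 2*(\<delta>*(l+1))" using hdr by simp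
    thus ?thesis using l0 by (simp add: field_simps power2_eq_square)
  qed
  have ex: "l-1/2+1 = l+1/2" by simp
  have lhs: "2*\<delta>^2*(1-(\<delta>*t)^2) powr (l-1/2)
       + (-2*(2*l*\<rho>)*\<delta>*(1-(\<delta>*t)^2) powr (l-1/2+1)/(l-1/2+1) + 2*(2*l*\<rho>)*t*\<delta>^2*((\<delta>*t)*(1-(\<delta>*t)^2) powr (l-1/2)))
     = K1 * S1 0 + K1 * S1 1 - K2 * S2 0"
  proof -
    have "-2*(2*l*\<rho>)*\<delta>*(1-(\<delta>*t)^2) powr (l-1/2+1)/(l-1/2+1) = -(2*(2*l*\<rho>)*\<delta>/(l-1/2+1)) * q powr (l+1/2)"
      unfolding q_def a_def ex by simp
    also have "\<dots> = - K2 * S2 0" unfolding rel S20 K2_def by simp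
    finally have g1: "-2*(2*l*\<rho>)*\<delta>*(1-(\<delta>*t)^2) powr (l-1/2+1)/(l-1/2+1) = - K2 * S2 0" .
    have g2: "2*(2*l*\<rho>)*t*\<delta>^2*((\<delta>*t)*(1-(\<delta>*t)^2) powr (l-1/2)) = K1 * S1 1"
      unfolding S11 K1_def q_def a_def by (simp add: algebra_simps)
    have g0: "2*\<delta>^2*(1-(\<delta>*t)^2) powr (l-1/2) = K1 * S1 0"
      unfolding S10 K1_def q_def a_def by simp
    show ?thesis unfolding g0 g1 g2 by simp
  qed
  have r: "2*\<delta>^2*(1-(\<delta>*t)^2) powr (l-1/2) *
         (\<Sum>k. fact k / pochhammer (2*l) k * gegenbauer l k (\<delta>*t) * gegenbauer l k t * \<rho>^k)
       - 4*(2*l+2)*\<delta>^2/(2*l+1)*(1-(\<delta>*t)^2) powr (l+1/2) *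
         (\<Sum>k. fact k / pochhammer (2*l+2) k * gegenbauer (l+1) k (\<delta>*t) * gegenbauer (l+1) k t * \<rho>^k)
       + 2*(2*l+2)^3*\<delta>^2/((2*l+3)*(2*l+1)*(2*l)) * (1-(\<delta>*t)^2) powr (l+3/2) *
         (\<Sum>k. fact k / pochhammer (2*l+4) k * gegenbauer (l+2) k (\<delta>*t) * gegenbauer (l+2) k t * \<rho>^k)
     = K1 * (\<Sum>k. S1 k) - K2 * (\<Sum>k. S2 k) + K3 * (\<Sum>k. S3 k)"
    by (simp only: K1_def K2_def K3_def S1_def S2_def S3_def q_def a_def)
  show ?thesis unfolding lhs hsum r by (simp add: algebra_simps)
qed

end

end




lemma deriv2_cong_open:
  fixes f g :: "real \<Rightarrow> real"
  assumes "\<And>s. -1 < s \<Longrightarrow> s < 1 \<Longrightarrow> f s = g s" "-1 < t" "t < 1"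
  shows "deriv (deriv f) t = deriv (deriv g) t"
proof -
  have ev: "eventually (\<lambda>s. s \<in> {-1<..<1}) (nhds x)" if "-1 < x" "x < 1" for x :: real
    using that by (intro eventually_nhds_in_open) auto
  have d: "deriv f s = deriv g s" if "-1 < s" "s < 1" for s
    by (rule deriv_cong_ev[OF eventually_mono[OF ev[OF that]]]) (use assms(1) in auto)
  show ?thesis
    by (rule deriv_cong_ev[OF eventually_mono[OF ev[OF assms(2,3)]]]) (use d in auto)
qed

theorem lemma4p1:
  fixes n :: nat and \<rho> \<delta> :: real and F G H :: "real \<Rightarrow> real" and t :: real
  assumes hn: "n \<ge> 3"
    and h\<rho>: "0 < \<rho>" "\<rho> < 1"
    and h\<delta>: "\<delta> = (real n - 2) / real n * \<rho>"
    and hF: "F = (\<lambda>t. integral {-1..1}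
                 (\<lambda>x. \<bar>\<delta> * t - x\<bar> * (1 - x\<^sup>2) powr ((real n - 3) / 2)))"
    and hG: "G = (\<lambda>t. (real n - 2) * \<rho> * t * integral {-1..1}
                 (\<lambda>x. \<bar>\<delta> * t - x\<bar> * (1 - x\<^sup>2) powr ((real n - 3) / 2) * x))"
    and hH: "H = (\<lambda>t. 2 / ((real n)\<^sup>2 - 1) * (1 - \<delta>\<^sup>2 * t\<^sup>2) powr ((real n + 1) / 2) *
                 (\<Sum>j. (let k = j + 2 in
                    fact (k - 2) / pochhammer (real n + 2) (k - 2)
                    * gegenbauer ((real n + 2) / 2) (k - 2) (\<delta> * t)
                    * gegenbauer ((real n - 2) / 2) k t * \<rho> ^ k)))"
    and ht: "-1 < t" "t < 1"
  shows "deriv (deriv F) t + deriv (deriv G) t + deriv (deriv H) t =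
      2 * \<delta>\<^sup>2 * (1 - \<delta>\<^sup>2 * t\<^sup>2) powr ((real n - 3) / 2) *
        (\<Sum>k. fact k / pochhammer (real n - 2) k
              * gegenbauer ((real n - 2) / 2) k (\<delta> * t)
              * gegenbauer ((real n - 2) / 2) k t * \<rho> ^ k)
    - 4 * real n * \<delta>\<^sup>2 / (real n - 1) * (1 - \<delta>\<^sup>2 * t\<^sup>2) powr ((real n - 1) / 2) *
        (\<Sum>k. fact k / pochhammer (real n) k
              * gegenbauer (real n / 2) k (\<delta> * t)
              * gegenbauer (real n / 2) k t * \<rho> ^ k)
    + 2 * (real n) ^ 3 * \<delta>\<^sup>2 / ((real n + 1) * (real n - 1) * (real n - 2))
        * (1 - \<delta>\<^sup>2 * t\<^sup>2) powr ((real n + 1) / 2) *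
        (\<Sum>k. fact k / pochhammer (real n + 2) k
              * gegenbauer ((real n + 2) / 2) k (\<delta> * t)
              * gegenbauer ((real n + 2) / 2) k t * \<rho> ^ k)"
proof -
  define l where "l = (real n - 2)/2"
  have nl: "real n = 2*l+2" unfolding l_def by (simp add: field_simps)
  have hl: "1/2 \<le> l" using hn unfolding l_def by simp
  have l0: "0 < l" using hl by simp
  have n0: "real n > 0" using hn by simp
  have dpos: "0 \<le> \<delta>" unfolding h\<delta> using hn h\<rho> by simp
  have dlt: "\<delta> < 1"
  proof -
    have c1: "(real n - 2) / real n \<le> 1" using n0 by simp
    have c0: "0 \<le> (real n - 2) / real n" using hn by simp
    have "(real n - 2) / real n * \<rho> \<le> \<rho>" using mult_left_le_one_le[OF _ c0 c1, of \<rho>] h\<rho> by simp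
    hence "\<delta> \<le> \<rho>" unfolding h\<delta> .
    thus ?thesis using h\<rho> by simp
  qed
  have hd: "\<bar>\<delta>\<bar> < 1" using dpos dlt by simp
  have hdr: "\<delta>*(l+1) = l*\<rho>" unfolding h\<delta> nl using l0 by (simp add: field_simps)
  define c0 where "c0 = 2/((2*l+1)*(2*l+3))"
  have e1: "(real n - 3)/2 = l - 1/2" unfolding l_def by (simp add: field_simps)
  have e2: "(real n - 2) * \<rho> = 2*l*\<rho>" unfolding l_def by (simp add: field_simps)
  have F2: "deriv (deriv F) t = 2*\<delta>^2*(1-(\<delta>*t)^2) powr (l-1/2)"
  proof -
    have "F = (\<lambda>t. integral {-1..1} (\<lambda>x. \<bar>\<delta>*t - x\<bar> * (1-x^2) powr (l-1/2)))"
      unfolding hF e1 ..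
    thus ?thesis using F_second[of "l-1/2" \<delta> t] hl hd ht by simp
  qed
  have G2: "deriv (deriv G) t = -2*(2*l*\<rho>)*\<delta>*(1-(\<delta>*t)^2) powr (l-1/2+1)/(l-1/2+1)
      + 2*(2*l*\<rho>)*t*\<delta>^2*((\<delta>*t)*(1-(\<delta>*t)^2) powr (l-1/2))"
  proof -
    have "G = (\<lambda>t. (2*l*\<rho>) * t * integral {-1..1} (\<lambda>x. \<bar>\<delta> * t - x\<bar> * (1-x^2) powr (l-1/2) * x))"
      unfolding hG e1 e2 ..
    thus ?thesis using G_second[of "l-1/2" \<delta> t "2*l*\<rho>"] hl hd ht by simp
  qed
  have H2: "deriv (deriv H) t = (\<Sum>j. h2 l \<delta> \<rho> c0 j t)"
  proof -
    have "deriv (deriv H) t = deriv (deriv (\<lambda>s. \<Sum>j. hh l \<delta> \<rho> c0 j s)) t"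
    proof (rule deriv2_cong_open[OF _ ht])
      fix s :: real assume s: "-1 < s" "s < 1"
      define K where "K = c0 * (1-(\<delta>* s)^2) powr (l+3/2)"
      define f where "f = (\<lambda>j. fact j / pochhammer (2*l+4) j * gegenbauer (l+2) j (\<delta>* s) * gegenbauer l (j+2) s * \<rho>^(j+2))"
      have hhe: "hh l \<delta> \<rho> c0 j s = K * f j" for j
        unfolding hh_def Kc_def UU_def K_def f_def by (simp add: algebra_simps)
      have qp: "0 < 1-(\<delta>* s)^2" using small_mult[OF hd s] by (simp add: abs_square_less_1 abs_less_iff)
      have K0: "K \<noteq> 0" unfolding K_def c0_def using qp l0 by simp
      have "summable (\<lambda>j. K * f j)" using hh_summable[OF hl hd h\<rho> s, of c0] unfolding hhe .
      hence sf: "summable f" using K0 by (simp add: summable_cmult_iff)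
      have "H s = K * (\<Sum>j. f j)"
      proof -
        have rn: "real n + 2 = 2*l+4" "(2*l+4)/2 = l+2" "(real n - 2)/2 = l" using nl by simp_all
        have i: "(\<Sum>j. (let k = j + 2 in fact (k - 2) / pochhammer (real n + 2) (k - 2)
                    * gegenbauer ((real n + 2) / 2) (k - 2) (\<delta> * s)
                    * gegenbauer ((real n - 2) / 2) k s * \<rho> ^ k)) = suminf f"
          by (rule arg_cong[where f=suminf], rule ext) (simp only: Let_def f_def rn add_diff_cancel_right')
        have pre1: "2/((real n)^2-1) = c0" unfolding c0_def nl by (simp add: algebra_simps power2_eq_square)
        have pre2: "(1-\<delta>^2* s^2) powr ((real n+1)/2) = (1-(\<delta> * s)^2) powr (l+3/2)"
        proof -
          have e: "(real n+1)/2 = l+3/2" using nl by simp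
          show ?thesis unfolding e by (simp add: power_mult_distrib)
        qed
        have "H s = 2/((real n)^2-1) * (1-\<delta>^2* s^2) powr ((real n+1)/2) * (\<Sum>j. (let k = j + 2 in fact (k - 2) / pochhammer (real n + 2) (k - 2)
                    * gegenbauer ((real n + 2) / 2) (k - 2) (\<delta> * s)
                    * gegenbauer ((real n - 2) / 2) k s * \<rho> ^ k))"
          unfolding hH by (simp only:)
        also have "\<dots> = K * (\<Sum>j. f j)" unfolding i pre1 pre2 K_def by simp
        finally show ?thesis .
      qed
      also have "\<dots> = (\<Sum>j. K * f j)" using sf by (simp add: suminf_mult)
      finally show "H s = (\<Sum>j. hh l \<delta> \<rho> c0 j s)" unfolding hhe .
    qed
    also have "\<dots> = (\<Sum>j. h2 l \<delta> \<rho> c0 j t)" by (rule H_series[OF hl hd h\<rho> ht])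
    finally show ?thesis .
  qed
  have fin: "2*\<delta>^2*(1-(\<delta>*t)^2) powr (l-1/2)
       + (-2*(2*l*\<rho>)*\<delta>*(1-(\<delta>*t)^2) powr (l-1/2+1)/(l-1/2+1) + 2*(2*l*\<rho>)*t*\<delta>^2*((\<delta>*t)*(1-(\<delta>*t)^2) powr (l-1/2)))
       + (\<Sum>j. h2 l \<delta> \<rho> c0 j t)
     = 2*\<delta>^2*(1-(\<delta>*t)^2) powr (l-1/2) *
         (\<Sum>k. fact k / pochhammer (2*l) k * gegenbauer l k (\<delta>*t) * gegenbauer l k t * \<rho>^k)
       - 4*(2*l+2)*\<delta>^2/(2*l+1)*(1-(\<delta>*t)^2) powr (l+1/2) *
         (\<Sum>k. fact k / pochhammer (2*l+2) k * gegenbauer (l+1) k (\<delta>*t) * gegenbauer (l+1) k t * \<rho>^k)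
       + 2*(2*l+2)^3*\<delta>^2/((2*l+3)*(2*l+1)*(2*l)) * (1-(\<delta>*t)^2) powr (l+3/2) *
         (\<Sum>k. fact k / pochhammer (2*l+4) k * gegenbauer (l+2) k (\<delta>*t) * gegenbauer (l+2) k t * \<rho>^k)"
    by (rule H_final[OF hl hd h\<rho> c0_def hdr ht])
  have r0: "\<delta>^2 * t^2 = (\<delta>*t)^2" by (simp add: power_mult_distrib)
  have rr: "2*l+2-3 = 2*l-1" "2*l+2-1 = 2*l+1" "2*l+2+1 = 2*l+3" "2*l+2-2 = 2*l" "2*l+2+2 = 2*l+4"
     "(2*l-1)/2 = l-1/2" "(2*l+1)/2 = l+1/2" "(2*l+3)/2 = l+3/2" "2*l/2 = l" "(2*l+2)/2 = l+1"
     "(2*l+4)/2 = l+2" by simp_all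
  show ?thesis
    unfolding F2 G2 H2 fin
    by (simp only: nl r0 rr)
qed


end
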